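(* Let $U$ be a model of $\mathrm{ZFCU}_R$. Then $U\models$ Collection if and only if the Łoś theorem holds for all internal ultrapowers of $U$.
   Context: $\mathrm{ZFCU}_R$ is ZFC with urelements (language $\{\in,\mathcal{A}\}$, $\mathcal{A}$ the urelement predicate), formulated with Replacement rather than Collection, with AC. Collection: for every formula $\varphi$, $\forall w,u(\forall x\in w\exists y\varphi(x,y,u)\rightarrow\exists v\forall x\in w\exists y\in v\varphi(x,y,u))$. Internal ultrapower: let $F,x\in U$ with $U\models$ "$F$ is an ultrafilter on $x$". For $f,g\in U$ that $U$ thinks are functions on $x$, put $f=_Fg$ iff $U\models\{y\in x: f(y)=g(y)\}\in F$; $[f]$ is the $=_F$-class of $f$ among such functions in $U$, and $U/F$ is the set of these classes, with $[g]\,\hat\in\,[f]$ iff $U\models\{y\in x:g(y)\in f(y)\}\in F$ and $\hat{\mathcal{A}}([f])$ iff $U\models\{y\in x:\mathcal{A}(f(y))\}\in F$. The internal ultrapower is $\langle U/F,\hat\in,\hat{\mathcal{A}}\rangle$. The Łoś theorem holds for $U/F$ if for every formula $\varphi$ and $[f_1],\dots,[f_n]\in U/F$: $U/F\models\varphi([f_1],\dots,[f_n])$ iff $U\models\{y\in x:\varphi(f_1(y),\dots,f_n(y))\}\in F$. *)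

theory Defs
  imports Main
begin

datatype fm =
    Mem nat nat
  | Eq nat nat
  | Ur nat
  | Neg fm
  | Conj fm fm
  | Exi nat fm

record 'a struc =
  univ :: "'a set"
  memb :: "'a \<Rightarrow> 'a \<Rightarrow> bool"
  urel :: "'a \<Rightarrow> bool"

fun sat :: "'a struc \<Rightarrow> fm \<Rightarrow> (nat \<Rightarrow> 'a) \<Rightarrow> bool" where
  "sat M (Mem i j) v = memb M (v i) (v j)"
| "sat M (Eq i j) v = (v i = v j)"
| "sat M (Ur i) v = urel M (v i)"
| "sat M (Neg p) v = (\<not> sat M p v)"
| "sat M (Conj p q) v = (sat M p v \<and> sat M q v)"
| "sat M (Exi n p) v = (\<exists>a\<in>univ M. sat M p (v(n := a)))"

definition is_set :: "'a struc \<Rightarrow> 'a \<Rightarrow> bool" where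
  "is_set M x \<longleftrightarrow> x \<in> univ M \<and> \<not> urel M x"

definition subset_of :: "'a struc \<Rightarrow> 'a \<Rightarrow> 'a \<Rightarrow> bool" where
  "subset_of M s x \<longleftrightarrow> is_set M s \<and> (\<forall>t\<in>univ M. memb M t s \<longrightarrow> memb M t x)"

definition is_upair :: "'a struc \<Rightarrow> 'a \<Rightarrow> 'a \<Rightarrow> 'a \<Rightarrow> bool" where
  "is_upair M z a b \<longleftrightarrow> is_set M z \<and> (\<forall>t\<in>univ M. memb M t z \<longleftrightarrow> t = a \<or> t = b)"

definition is_opair :: "'a struc \<Rightarrow> 'a \<Rightarrow> 'a \<Rightarrow> 'a \<Rightarrow> bool" where
  "is_opair M p a b \<longleftrightarrow> is_set M p \<and>
     (\<forall>z\<in>univ M. memb M z p \<longleftrightarrow> is_upair M z a a \<or> is_upair M z a b)"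

definition ZFCU_R :: "'a struc \<Rightarrow> bool" where
  "ZFCU_R M \<longleftrightarrow> (let U = univ M; E = memb M in
     U \<noteq> {}
   \<comment> \<open>urelements have no members\<close>
   \<and> (\<forall>x\<in>U. urel M x \<longrightarrow> \<not> (\<exists>y\<in>U. E y x))
   \<comment> \<open>extensionality for sets\<close>
   \<and> (\<forall>x\<in>U. \<forall>y\<in>U. is_set M x \<and> is_set M y \<and> (\<forall>z\<in>U. E z x \<longleftrightarrow> E z y) \<longrightarrow> x = y)
   \<comment> \<open>foundation\<close>
   \<and> (\<forall>x\<in>U. (\<exists>y\<in>U. E y x) \<longrightarrow> (\<exists>y\<in>U. E y x \<and> \<not> (\<exists>z\<in>U. E z x \<and> E z y)))
   \<comment> \<open>pairing\<close>
   \<and> (\<forall>a\<in>U. \<forall>b\<in>U. \<exists>y\<in>U. E a y \<and> E b y)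
   \<comment> \<open>union\<close>
   \<and> (\<forall>x\<in>U. \<exists>y\<in>U. \<forall>z\<in>U. E z x \<longrightarrow> (\<forall>t\<in>U. E t z \<longrightarrow> E t y))
   \<comment> \<open>powerset\<close>
   \<and> (\<forall>x\<in>U. \<exists>y\<in>U. \<forall>z\<in>U. subset_of M z x \<longrightarrow> E z y)
   \<comment> \<open>infinity\<close>
   \<and> (\<exists>w\<in>U. (\<exists>e\<in>U. is_set M e \<and> (\<forall>t\<in>U. \<not> E t e) \<and> E e w)
        \<and> (\<forall>z\<in>U. E z w \<longrightarrow>
             (\<exists>s\<in>U. E s w \<and> is_set M s \<and> (\<forall>t\<in>U. E t s \<longleftrightarrow> E t z \<or> t = z))))
   \<comment> \<open>separation schema\<close>
   \<and> (\<forall>\<phi> i e. (\<forall>k. e k \<in> U) \<longrightarrow> (\<forall>w\<in>U. \<exists>s\<in>U. is_set M s \<and>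
        (\<forall>z\<in>U. E z s \<longleftrightarrow> E z w \<and> sat M \<phi> (e(i := z)))))
   \<comment> \<open>replacement schema\<close>
   \<and> (\<forall>\<phi> i j e. i \<noteq> j \<longrightarrow> (\<forall>k. e k \<in> U) \<longrightarrow> (\<forall>w\<in>U.
        (\<forall>x\<in>U. E x w \<longrightarrow> (\<exists>!y. y \<in> U \<and> sat M \<phi> (e(i := x, j := y)))) \<longrightarrow>
        (\<exists>v\<in>U. \<forall>x\<in>U. E x w \<longrightarrow> (\<exists>y\<in>U. E y v \<and> sat M \<phi> (e(i := x, j := y))))))
   \<comment> \<open>choice: every set is well-orderable (by a set of Kuratowski pairs)\<close>
   \<and> (\<forall>x\<in>U. is_set M x \<longrightarrow> (\<exists>r\<in>U.
        let lt = (\<lambda>a b. \<exists>p\<in>U. E p r \<and> is_opair M p a b) in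
          (\<forall>a\<in>U. E a x \<longrightarrow> \<not> lt a a)
        \<and> (\<forall>a\<in>U. \<forall>b\<in>U. \<forall>c\<in>U. E a x \<and> E b x \<and> E c x \<and> lt a b \<and> lt b c \<longrightarrow> lt a c)
        \<and> (\<forall>a\<in>U. \<forall>b\<in>U. E a x \<and> E b x \<longrightarrow> lt a b \<or> a = b \<or> lt b a)
        \<and> (\<forall>s\<in>U. subset_of M s x \<and> (\<exists>t\<in>U. E t s) \<longrightarrow>
             (\<exists>a\<in>U. E a s \<and> (\<forall>b\<in>U. E b s \<longrightarrow> \<not> lt b a))))))"

definition Collection :: "'a struc \<Rightarrow> bool" where
  "Collection M \<longleftrightarrow> (\<forall>\<phi> i j e. i \<noteq> j \<longrightarrow> (\<forall>k. e k \<in> univ M) \<longrightarrow> (\<forall>w\<in>univ M.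
     (\<forall>x\<in>univ M. memb M x w \<longrightarrow> (\<exists>y\<in>univ M. sat M \<phi> (e(i := x, j := y)))) \<longrightarrow>
     (\<exists>v\<in>univ M. \<forall>x\<in>univ M. memb M x w \<longrightarrow>
        (\<exists>y\<in>univ M. memb M y v \<and> sat M \<phi> (e(i := x, j := y))))))"

definition is_ultrafilter :: "'a struc \<Rightarrow> 'a \<Rightarrow> 'a \<Rightarrow> bool" where
  "is_ultrafilter M F x \<longleftrightarrow> (let U = univ M; E = memb M in
     is_set M F
   \<and> (\<forall>s\<in>U. E s F \<longrightarrow> subset_of M s x)
   \<and> E x F
   \<and> (\<forall>s\<in>U. E s F \<longrightarrow> (\<exists>t\<in>U. E t s))
   \<and> (\<forall>s\<in>U. \<forall>t\<in>U. \<forall>u\<in>U. E s F \<and> E t F \<and> is_set M u \<and>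
        (\<forall>z\<in>U. E z u \<longleftrightarrow> E z s \<and> E z t) \<longrightarrow> E u F)
   \<and> (\<forall>s\<in>U. \<forall>t\<in>U. E s F \<and> subset_of M t x \<and> (\<forall>z\<in>U. E z s \<longrightarrow> E z t) \<longrightarrow> E t F)
   \<and> (\<forall>s\<in>U. subset_of M s x \<longrightarrow> E s F \<or>
        (\<forall>c\<in>U. is_set M c \<and> (\<forall>z\<in>U. E z c \<longleftrightarrow> E z x \<and> \<not> E z s) \<longrightarrow> E c F)))"

definition is_fun_on :: "'a struc \<Rightarrow> 'a \<Rightarrow> 'a \<Rightarrow> bool" where
  "is_fun_on M f x \<longleftrightarrow> is_set M f
   \<and> (\<forall>p\<in>univ M. memb M p f \<longrightarrow> (\<exists>a\<in>univ M. \<exists>b\<in>univ M. memb M a x \<and> is_opair M p a b))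
   \<and> (\<forall>a\<in>univ M. memb M a x \<longrightarrow>
        (\<exists>!b. b \<in> univ M \<and> (\<exists>p\<in>univ M. memb M p f \<and> is_opair M p a b)))"

definition app :: "'a struc \<Rightarrow> 'a \<Rightarrow> 'a \<Rightarrow> 'a" where
  "app M f a = (THE b. b \<in> univ M \<and> (\<exists>p\<in>univ M. memb M p f \<and> is_opair M p a b))"

definition in_filter :: "'a struc \<Rightarrow> 'a \<Rightarrow> 'a \<Rightarrow> ('a \<Rightarrow> bool) \<Rightarrow> bool" where
  "in_filter M F x P \<longleftrightarrow> (\<exists>s\<in>univ M. memb M s F \<and> is_set M s \<and>
     (\<forall>y\<in>univ M. memb M y s \<longleftrightarrow> memb M y x \<and> P y))"

definition cls :: "'a struc \<Rightarrow> 'a \<Rightarrow> 'a \<Rightarrow> 'a \<Rightarrow> 'a set" where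
  "cls M F x f = {g \<in> univ M. is_fun_on M g x \<and> in_filter M F x (\<lambda>y. app M f y = app M g y)}"

definition ultrapower :: "'a struc \<Rightarrow> 'a \<Rightarrow> 'a \<Rightarrow> 'a set struc" where
  "ultrapower M F x =
     \<lparr> univ = {cls M F x f | f. f \<in> univ M \<and> is_fun_on M f x},
       memb = (\<lambda>C D. \<exists>g\<in>C. \<exists>f\<in>D. in_filter M F x (\<lambda>y. memb M (app M g y) (app M f y))),
       urel = (\<lambda>C. \<exists>f\<in>C. in_filter M F x (\<lambda>y. urel M (app M f y))) \<rparr>"

definition Los :: "'a struc \<Rightarrow> 'a \<Rightarrow> 'a \<Rightarrow> bool" where
  "Los M F x \<longleftrightarrow> (\<forall>\<phi> g. (\<forall>i. g i \<in> univ M \<and> is_fun_on M (g i) x) \<longrightarrow>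
     (sat (ultrapower M F x) \<phi> (\<lambda>i. cls M F x (g i)) \<longleftrightarrow>
      in_filter M F x (\<lambda>y. sat M \<phi> (\<lambda>i. app M (g i) y))))"

end

theory Submission
  imports Defs
begin

definition Dis where "Dis p q = Neg (Conj (Neg p) (Neg q))"
definition Imp where "Imp p q = Neg (Conj p (Neg q))"
definition Iff where "Iff p q = Conj (Imp p q) (Imp q p)"
definition All where "All n p = Neg (Exi n (Neg p))"

lemma sat_derived[simp]:
 "sat M (Dis p q) v = (sat M p v \<or> sat M q v)"
 "sat M (Imp p q) v = (sat M p v \<longrightarrow> sat M q v)"
 "sat M (Iff p q) v = (sat M p v \<longleftrightarrow> sat M q v)"
 "sat M (All n p) v = (\<forall>a\<in>univ M. sat M p (v(n:=a)))"
 by (auto simp: Dis_def Imp_def Iff_def All_def)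

definition upair_fm where
 "upair_fm z a b t = Conj (Neg (Ur z)) (All t (Iff (Mem t z) (Dis (Eq t a) (Eq t b))))"

lemma sat_upair_fm[simp]: "z \<noteq> t \<Longrightarrow> a \<noteq> t \<Longrightarrow> b \<noteq> t \<Longrightarrow> v z \<in> univ M \<Longrightarrow>
  sat M (upair_fm z a b t) v = is_upair M (v z) (v a) (v b)"
  by (simp add: upair_fm_def is_upair_def is_set_def)

definition opair_fm where
 "opair_fm p a b z t = Conj (Neg (Ur p)) (All z (Iff (Mem z p) (Dis (upair_fm z a a t) (upair_fm z a b t))))"

lemma sat_opair_fm[simp]: "p \<noteq> z \<Longrightarrow> a \<noteq> z \<Longrightarrow> b \<noteq> z \<Longrightarrow> z \<noteq> t \<Longrightarrow> a \<noteq> t \<Longrightarrow> b \<noteq> t \<Longrightarrow> v p \<in> univ M \<Longrightarrow>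
  sat M (opair_fm p a b z t) v = is_opair M (v p) (v a) (v b)"
  by (simp add: opair_fm_def is_opair_def is_set_def)

locale zfu = fixes M :: "'a struc" assumes zf: "ZFCU_R M"
begin

abbreviation UU where "UU \<equiv> univ M"
abbreviation E where "E \<equiv> memb M"

lemmas ax = zf[unfolded ZFCU_R_def Let_def]
lemmas ax1 = ax[THEN conjunct1]
lemmas ax2 = ax[THEN conjunct2, THEN conjunct1]
lemmas ax3 = ax[THEN conjunct2, THEN conjunct2, THEN conjunct1]
lemmas ax4 = ax[THEN conjunct2, THEN conjunct2, THEN conjunct2, THEN conjunct1]
lemmas ax5 = ax[THEN conjunct2, THEN conjunct2, THEN conjunct2, THEN conjunct2, THEN conjunct1]
lemmas ax6 = ax[THEN conjunct2, THEN conjunct2, THEN conjunct2, THEN conjunct2, THEN conjunct2, THEN conjunct1]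
lemmas ax7 = ax[THEN conjunct2, THEN conjunct2, THEN conjunct2, THEN conjunct2, THEN conjunct2, THEN conjunct2, THEN conjunct1]
lemmas ax8 = ax[THEN conjunct2, THEN conjunct2, THEN conjunct2, THEN conjunct2, THEN conjunct2, THEN conjunct2, THEN conjunct2, THEN conjunct1]
lemmas ax9 = ax[THEN conjunct2, THEN conjunct2, THEN conjunct2, THEN conjunct2, THEN conjunct2, THEN conjunct2, THEN conjunct2, THEN conjunct2, THEN conjunct1]
lemmas ax10 = ax[THEN conjunct2, THEN conjunct2, THEN conjunct2, THEN conjunct2, THEN conjunct2, THEN conjunct2, THEN conjunct2, THEN conjunct2, THEN conjunct2, THEN conjunct1]
lemmas ax11 = ax[THEN conjunct2, THEN conjunct2, THEN conjunct2, THEN conjunct2, THEN conjunct2, THEN conjunct2, THEN conjunct2, THEN conjunct2, THEN conjunct2, THEN conjunct2]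

lemma nonempty: "UU \<noteq> {}" using ax1 by blast
lemma ur_nomem: "x \<in> UU \<Longrightarrow> urel M x \<Longrightarrow> y \<in> UU \<Longrightarrow> \<not> E y x" using ax2 by blast
lemma mem_set: "x \<in> UU \<Longrightarrow> y \<in> UU \<Longrightarrow> E y x \<Longrightarrow> is_set M x" using ur_nomem unfolding is_set_def by blast
lemma extens: "is_set M x \<Longrightarrow> is_set M y \<Longrightarrow> (\<And>z. z \<in> UU \<Longrightarrow> E z x \<longleftrightarrow> E z y) \<Longrightarrow> x = y"
  using ax3 unfolding is_set_def by blast
lemma foundation: "x \<in> UU \<Longrightarrow> y \<in> UU \<Longrightarrow> E y x \<Longrightarrow> \<exists>y\<in>UU. E y x \<and> \<not> (\<exists>z\<in>UU. E z x \<and> E z y)"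
  using ax4 by blast
lemma pairing: "a \<in> UU \<Longrightarrow> b \<in> UU \<Longrightarrow> \<exists>y\<in>UU. E a y \<and> E b y" using ax5 by blast
lemma union_ax: "x \<in> UU \<Longrightarrow> \<exists>y\<in>UU. \<forall>z\<in>UU. E z x \<longrightarrow> (\<forall>t\<in>UU. E t z \<longrightarrow> E t y)"
  using ax6 by blast
lemma power_ax: "x \<in> UU \<Longrightarrow> \<exists>y\<in>UU. \<forall>z\<in>UU. subset_of M z x \<longrightarrow> E z y"
  using ax7 by blast
lemma empty_ex: "\<exists>e\<in>UU. is_set M e \<and> (\<forall>t\<in>UU. \<not> E t e)"
  using ax8 by blast
lemma separation: "(\<forall>k. e k \<in> UU) \<Longrightarrow> w \<in> UU \<Longrightarrow>
   \<exists>s\<in>UU. is_set M s \<and> (\<forall>z\<in>UU. E z s \<longleftrightarrow> E z w \<and> sat M \<phi> (e(i := z)))"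
  using ax9 by blast
lemma sep: assumes "\<forall>k. e k \<in> UU" "w \<in> UU" "\<And>z. z \<in> UU \<Longrightarrow> E z w \<Longrightarrow> sat M \<phi> (e(i := z)) = P z"
  shows "\<exists>s\<in>UU. is_set M s \<and> (\<forall>z\<in>UU. E z s \<longleftrightarrow> E z w \<and> P z)"
proof -
  obtain s where "s \<in> UU" "is_set M s" "\<forall>z\<in>UU. E z s \<longleftrightarrow> E z w \<and> sat M \<phi> (e(i := z))"
    using separation[OF assms(1,2)] by blast
  then show ?thesis using assms(3) by (metis)
qed
definition ltr where "ltr r a b \<longleftrightarrow> (\<exists>p\<in>UU. E p r \<and> is_opair M p a b)"

lemma choice_ax: "x \<in> UU \<Longrightarrow> is_set M x \<Longrightarrow> (\<exists>r\<in>UU.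
          (\<forall>a\<in>UU. E a x \<longrightarrow> \<not> ltr r a a)
        \<and> (\<forall>a\<in>UU. \<forall>b\<in>UU. \<forall>c\<in>UU. E a x \<and> E b x \<and> E c x \<and> ltr r a b \<and> ltr r b c \<longrightarrow> ltr r a c)
        \<and> (\<forall>a\<in>UU. \<forall>b\<in>UU. E a x \<and> E b x \<longrightarrow> ltr r a b \<or> a = b \<or> ltr r b a)
        \<and> (\<forall>s\<in>UU. subset_of M s x \<and> (\<exists>t\<in>UU. E t s) \<longrightarrow>
             (\<exists>a\<in>UU. E a s \<and> (\<forall>b\<in>UU. E b s \<longrightarrow> \<not> ltr r b a))))"
  unfolding ltr_def using ax11 by blast

lemma upair_ex: assumes "a \<in> UU" "b \<in> UU" shows "\<exists>z\<in>UU. is_upair M z a b"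
proof -
  obtain y where y: "y \<in> UU" "E a y" "E b y" using pairing assms by blast
  have "\<exists>s\<in>UU. is_set M s \<and> (\<forall>z\<in>UU. E z s \<longleftrightarrow> E z y \<and> (z = a \<or> z = b))"
    by (rule sep[where e="(\<lambda>_. a)(1:=a, 2:=b)" and i=0 and \<phi>="Dis (Eq 0 1) (Eq 0 2)"])
       (use assms y in auto)
  then show ?thesis using y unfolding is_upair_def by metis
qed

lemma upair_unique: "is_upair M z a b \<Longrightarrow> is_upair M z' a b \<Longrightarrow> z = z'"
  unfolding is_upair_def by (intro extens) auto

lemma upair_in: "is_upair M z a b \<Longrightarrow> z \<in> UU"
  unfolding is_upair_def is_set_def by auto

lemma opair_ex: assumes "a \<in> UU" "b \<in> UU" shows "\<exists>p\<in>UU. is_opair M p a b"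
proof -
  obtain z1 where z1: "z1 \<in> UU" "is_upair M z1 a a" using upair_ex assms by blast
  obtain z2 where z2: "z2 \<in> UU" "is_upair M z2 a b" using upair_ex assms by blast
  obtain p where p: "p \<in> UU" "is_upair M p z1 z2" using upair_ex z1 z2 by blast
  have "is_opair M p a b" unfolding is_opair_def
  proof (intro conjI ballI)
    show "is_set M p" using p unfolding is_upair_def by auto
    fix z assume z: "z \<in> UU"
    have "E z p \<longleftrightarrow> z = z1 \<or> z = z2" using p z unfolding is_upair_def by blast
    also have "z = z1 \<longleftrightarrow> is_upair M z a a" using z1 upair_unique by blast
    also have "z = z2 \<longleftrightarrow> is_upair M z a b" using z2 upair_unique by blast
    finally show "E z p = (is_upair M z a a \<or> is_upair M z a b)" .
  qed
  then show ?thesis using p by blast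
qed

lemma opair_unique: "is_opair M p a b \<Longrightarrow> is_opair M q a b \<Longrightarrow> p = q"
  unfolding is_opair_def by (intro extens) auto

lemma opair_in: "is_opair M p a b \<Longrightarrow> p \<in> UU"
  unfolding is_opair_def is_set_def by auto

lemma opair_inj: assumes "is_opair M p a b" "is_opair M p c d" "a \<in> UU" "b \<in> UU" "c \<in> UU" "d \<in> UU"
  shows "a = c \<and> b = d"
proof -
  obtain z1 where z1: "z1 \<in> UU" "is_upair M z1 a a" using upair_ex assms by blast
  obtain z2 where z2: "z2 \<in> UU" "is_upair M z2 a b" using upair_ex assms by blast
  obtain z3 where z3: "z3 \<in> UU" "is_upair M z3 c c" using upair_ex assms by blast
  obtain z4 where z4: "z4 \<in> UU" "is_upair M z4 c d" using upair_ex assms by blast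
  have m1: "E z1 p" "E z2 p" using assms(1) z1 z2 unfolding is_opair_def by auto
  have m3: "E z3 p" "E z4 p" using assms(2) z3 z4 unfolding is_opair_def by auto
  have z1m: "\<And>t. t \<in> UU \<Longrightarrow> E t z1 \<longleftrightarrow> t = a" using z1 unfolding is_upair_def by blast
  have z2m: "\<And>t. t \<in> UU \<Longrightarrow> E t z2 \<longleftrightarrow> t = a \<or> t = b" using z2 unfolding is_upair_def by blast
  have z4m: "\<And>t. t \<in> UU \<Longrightarrow> E t z4 \<longleftrightarrow> t = c \<or> t = d" using z4 unfolding is_upair_def by blast
  have ac: "a = c"
  proof -
    have "is_upair M z1 c c \<or> is_upair M z1 c d" using m1 z1 assms(2) unfolding is_opair_def by auto
    then have "E c z1" using assms(5) unfolding is_upair_def by blast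
    then show ?thesis using z1m assms(5) by blast
  qed
  have h2: "is_upair M z2 c c \<or> is_upair M z2 c d" using m1 z2 assms(2) unfolding is_opair_def by auto
  have h4: "is_upair M z4 a a \<or> is_upair M z4 a b" using m3 z4 assms(1) unfolding is_opair_def by auto
  have "b = d"
  proof (cases "b = a")
    case True
    from h4 have "E d z4 \<Longrightarrow> d = a" using True assms(6) unfolding is_upair_def by blast
    then show ?thesis using z4m assms(6) True by blast
  next
    case False
    from h2 have "E b z2" using z2m assms(4) by blast
    from h2 have "\<forall>t\<in>UU. E t z2 \<longrightarrow> t = c \<or> t = d" unfolding is_upair_def by blast
    then have "b = c \<or> b = d" using z2m assms(4) by blast
    then show ?thesis using False ac by blast
  qed
  with ac show ?thesis by blast
qed

end

context zfu begin

lemma union2: assumes "h \<in> UU" shows "\<exists>V\<in>UU. \<forall>p\<in>UU. E p h \<longrightarrow> (\<forall>z\<in>UU. E z p \<longrightarrow> (\<forall>b\<in>UU. E b z \<longrightarrow> E b V))"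
proof -
  obtain y1 where y1: "y1 \<in> UU" "\<forall>z\<in>UU. E z h \<longrightarrow> (\<forall>t\<in>UU. E t z \<longrightarrow> E t y1)" using union_ax assms by blast
  obtain y2 where y2: "y2 \<in> UU" "\<forall>z\<in>UU. E z y1 \<longrightarrow> (\<forall>t\<in>UU. E t z \<longrightarrow> E t y2)" using union_ax y1 by blast
  show ?thesis using y1 y2 by blast
qed

lemma opair_snd_in: assumes "is_opair M p a b" "a \<in> UU" "b \<in> UU"
  shows "\<exists>z\<in>UU. E z p \<and> E b z"
proof -
  obtain z where z: "z \<in> UU" "is_upair M z a b" using upair_ex assms by blast
  then have "E z p" using assms(1) unfolding is_opair_def by blast
  moreover have "E b z" using z assms unfolding is_upair_def by blast
  ultimately show ?thesis using z by blast
qed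

lemma pairs_big: assumes "x \<in> UU" "v \<in> UU"
  shows "\<exists>B\<in>UU. \<forall>a\<in>UU. \<forall>b\<in>UU. \<forall>p\<in>UU. E a x \<longrightarrow> E b v \<longrightarrow> is_opair M p a b \<longrightarrow> E p B"
proof -
  obtain y0 where y0: "y0 \<in> UU" "E x y0" "E v y0" using pairing assms by blast
  obtain S where S: "S \<in> UU" "\<forall>z\<in>UU. E z y0 \<longrightarrow> (\<forall>t\<in>UU. E t z \<longrightarrow> E t S)" using union_ax y0 by blast
  obtain P1 where P1: "P1 \<in> UU" "\<forall>z\<in>UU. subset_of M z S \<longrightarrow> E z P1" using power_ax S by blast
  obtain P2 where P2: "P2 \<in> UU" "\<forall>z\<in>UU. subset_of M z P1 \<longrightarrow> E z P2" using power_ax P1 by blast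
  show ?thesis
  proof (intro bexI[OF _ P2(1)] ballI impI)
    fix a b p assume ab: "a \<in> UU" "b \<in> UU" "p \<in> UU" "E a x" "E b v" "is_opair M p a b"
    have aS: "E a S" "E b S" using S y0 ab assms by blast+
    have up: "E z P1" if "is_upair M z a a \<or> is_upair M z a b" "z \<in> UU" for z
      using P1 that aS ab(1,2) unfolding subset_of_def is_upair_def by auto
    have "subset_of M p P1" using ab(6) up unfolding subset_of_def is_opair_def by blast
    then show "E p P2" using P2 ab by blast
  qed
qed

lemma fun_app: assumes "is_fun_on M f x" "a \<in> UU" "E a x"
  shows "app M f a \<in> UU" "\<exists>p\<in>UU. E p f \<and> is_opair M p a (app M f a)"
    "b \<in> UU \<Longrightarrow> (\<exists>p\<in>UU. E p f \<and> is_opair M p a b) \<longleftrightarrow> b = app M f a"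
proof -
  have ex1: "\<exists>!b. b \<in> UU \<and> (\<exists>p\<in>UU. E p f \<and> is_opair M p a b)" using assms unfolding is_fun_on_def by blast
  have th: "app M f a \<in> UU \<and> (\<exists>p\<in>UU. E p f \<and> is_opair M p a (app M f a))"
    unfolding app_def by (rule theI'[OF ex1])
  then show "app M f a \<in> UU" "\<exists>p\<in>UU. E p f \<and> is_opair M p a (app M f a)" by auto
  show "b \<in> UU \<Longrightarrow> (\<exists>p\<in>UU. E p f \<and> is_opair M p a b) \<longleftrightarrow> b = app M f a"
    using ex1 th by blast
qed

lemma mk_fun:
  assumes "x \<in> UU" "h \<in> UU" "is_set M h"
    and hm: "\<forall>p\<in>UU. E p h \<longleftrightarrow> (\<exists>a\<in>UU. \<exists>b\<in>UU. E a x \<and> is_opair M p a b \<and> R a b)"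
    and ex: "\<forall>a\<in>UU. E a x \<longrightarrow> (\<exists>b\<in>UU. R a b)"
    and un: "\<forall>a\<in>UU. E a x \<longrightarrow> (\<forall>b1\<in>UU. \<forall>b2\<in>UU. R a b1 \<longrightarrow> R a b2 \<longrightarrow> b1 = b2)"
  shows "is_fun_on M h x" "\<forall>a\<in>UU. E a x \<longrightarrow> R a (app M h a)"
proof -
  have E1: "\<exists>!b. b \<in> UU \<and> (\<exists>p\<in>UU. E p h \<and> is_opair M p a b)" if a: "a \<in> UU" "E a x" for a
  proof -
    obtain b where b: "b \<in> UU" "R a b" using ex a by blast
    obtain p where p: "p \<in> UU" "is_opair M p a b" using opair_ex a b by blast
    have "E p h" using hm p a b by (meson)
    moreover have "b' = b" if bp: "b' \<in> UU" "p' \<in> UU" "E p' h" "is_opair M p' a b'" for b' p'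
    proof -
      obtain a'' b'' where ab: "a'' \<in> UU" "b'' \<in> UU" "E a'' x" "is_opair M p' a'' b''" "R a'' b''"
        using hm[rule_format, OF bp(2)] bp(3) by blast
      then have "a'' = a" "b'' = b'" using opair_inj[OF ab(4) bp(4)] a bp by blast+
      then have "R a b'" using ab by simp
      then show ?thesis using un a b bp(1) by blast
    qed
    ultimately show ?thesis using b p by blast
  qed
  show hf: "is_fun_on M h x" unfolding is_fun_on_def
  proof (intro conjI ballI impI)
    show "is_set M h" by fact
    fix p assume "p \<in> UU" "E p h"
    then show "\<exists>a\<in>UU. \<exists>b\<in>UU. E a x \<and> is_opair M p a b" using hm[rule_format, of p] by blast
  next
    fix a assume "a \<in> UU" "E a x"
    then show "\<exists>!b. b \<in> UU \<and> (\<exists>p\<in>UU. E p h \<and> is_opair M p a b)" by (rule E1)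
  qed
  show "\<forall>a\<in>UU. E a x \<longrightarrow> R a (app M h a)"
  proof (intro ballI impI)
    fix a assume a: "a \<in> UU" "E a x"
    obtain p where p: "p \<in> UU" "E p h" "is_opair M p a (app M h a)"
      using fun_app(2)[OF hf a] by blast
    obtain a'' b'' where ab: "a'' \<in> UU" "b'' \<in> UU" "E a'' x" "is_opair M p a'' b''" "R a'' b''"
      using hm[rule_format, OF p(1)] p(2) by blast
    have "a'' = a \<and> b'' = app M h a" using opair_inj[OF ab(4) p(3)] ab a fun_app(1)[OF hf a] by blast
    then show "R a (app M h a)" using ab by simp
  qed
qed

end

definition Fs :: "nat \<Rightarrow> nat" where "Fs i = 2*i+20"
definition Ds :: "nat \<Rightarrow> nat" where "Ds i = 2*i+21"

lemma FD_simps[simp]: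
  "(Fs i = Fs j) = (i = j)" "(Ds i = Ds j) = (i = j)"
  "(Fs i = Ds j) = False" "(Ds j = Fs i) = False"
  "n < 20 \<Longrightarrow> (Fs i = n) = False" "n < 20 \<Longrightarrow> (n = Fs i) = False"
  "n < 20 \<Longrightarrow> (Ds i = n) = False" "n < 20 \<Longrightarrow> (n = Ds i) = False"
  unfolding Fs_def Ds_def by presburger+

definition VALF :: "nat set \<Rightarrow> nat \<Rightarrow> nat \<Rightarrow> fm" where
  "VALF D i T = (if i \<in> D then Eq T (Ds i) else Exi 1 (Conj (Mem 1 (Fs i)) (opair_fm 1 9 T 2 3)))"

fun tr :: "nat set \<Rightarrow> fm \<Rightarrow> fm" where
  "tr D (Mem i j) = Exi 4 (Exi 5 (Conj (Conj (VALF D i 4) (VALF D j 5)) (Mem 4 5)))"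
| "tr D (Eq i j) = Exi 4 (Exi 5 (Conj (Conj (VALF D i 4) (VALF D j 5)) (Eq 4 5)))"
| "tr D (Ur i) = Exi 4 (Conj (VALF D i 4) (Ur 4))"
| "tr D (Neg p) = Neg (tr D p)"
| "tr D (Conj p q) = Conj (tr D p) (tr D q)"
| "tr D (Exi n p) = Exi (Ds n) (tr (insert n D) p)"

context zfu begin

definition good :: "'a \<Rightarrow> (nat \<Rightarrow> 'a) \<Rightarrow> bool" where
  "good x w \<longleftrightarrow> (\<forall>k. w k \<in> UU) \<and> (\<forall>k. is_fun_on M (w (Fs k)) x) \<and> E (w 9) x"

definition val :: "nat set \<Rightarrow> (nat \<Rightarrow> 'a) \<Rightarrow> nat \<Rightarrow> 'a" where
  "val D w k = (if k \<in> D then w (Ds k) else app M (w (Fs k)) (w 9))"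

lemma good_upd: "good x w \<Longrightarrow> a \<in> UU \<Longrightarrow> (\<And>k. m \<noteq> Fs k) \<Longrightarrow> m \<noteq> 9 \<Longrightarrow> good x (w(m:=a))"
  unfolding good_def by auto

lemma val_in: assumes "good x w" shows "val D w k \<in> UU"
proof -
  have g: "\<forall>k. w k \<in> UU" "is_fun_on M (w (Fs k)) x" "E (w 9) x" using assms unfolding good_def by auto
  show ?thesis unfolding val_def using g fun_app(1)[OF g(2) _ g(3)] by auto
qed

lemma val_upd: "(\<And>k. m \<noteq> Fs k) \<Longrightarrow> (\<And>k. m \<noteq> Ds k) \<Longrightarrow> m \<noteq> 9 \<Longrightarrow> val D (w(m:=a)) = val D w"
  unfolding val_def by (rule ext) (metis fun_upd_other)

lemma sat_VALF: assumes "good x w" "T = 4 \<or> T = 5"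
  shows "sat M (VALF D i T) w \<longleftrightarrow> w T = val D w i"
proof (cases "i \<in> D")
  case True then show ?thesis by (simp add: VALF_def val_def)
next
  case False
  have g: "\<forall>k. w k \<in> UU" "is_fun_on M (w (Fs i)) x" "E (w 9) x" using assms(1) unfolding good_def by auto
  have "sat M (VALF D i T) w \<longleftrightarrow> (\<exists>p\<in>UU. E p (w (Fs i)) \<and> is_opair M p (w 9) (w T))"
    using False assms(2) by (auto simp add: VALF_def)
  also have "\<dots> \<longleftrightarrow> w T = app M (w (Fs i)) (w 9)"
    using fun_app(3)[OF g(2) _ g(3)] g(1) by blast
  finally show ?thesis using False by (simp add: val_def)
qed

lemma sat_tr: "good x w \<Longrightarrow> sat M (tr D \<phi>) w \<longleftrightarrow> sat M \<phi> (val D w)"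
proof (induction \<phi> arbitrary: D w)
  case (Mem i j)
  have "sat M (tr D (Mem i j)) w \<longleftrightarrow> (\<exists>a\<in>UU. \<exists>b\<in>UU. a = val D w i \<and> b = val D w j \<and> E a b)"
  proof -
    have "sat M (VALF D i 4) (w(4:=a, 5:=b)) \<longleftrightarrow> a = val D w i"
      "sat M (VALF D j 5) (w(4:=a, 5:=b)) \<longleftrightarrow> b = val D w j" if "a \<in> UU" "b \<in> UU" for a b
    proof -
      have gg: "good x (w(4:=a, 5:=b))" using good_upd Mem.prems that by (simp add: good_upd)
      have vv: "val D (w(4:=a, 5:=b)) = val D w" by (simp add: val_upd)
      show "sat M (VALF D i 4) (w(4:=a, 5:=b)) \<longleftrightarrow> a = val D w i"
        using sat_VALF[OF gg, of 4] vv by simp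
      show "sat M (VALF D j 5) (w(4:=a, 5:=b)) \<longleftrightarrow> b = val D w j"
        using sat_VALF[OF gg, of 5] vv by simp
    qed
    then show ?thesis by auto
  qed
  then show ?case using val_in[OF Mem.prems] by auto
next
  case (Eq i j)
  have "sat M (tr D (Eq i j)) w \<longleftrightarrow> (\<exists>a\<in>UU. \<exists>b\<in>UU. a = val D w i \<and> b = val D w j \<and> a = b)"
  proof -
    have "sat M (VALF D i 4) (w(4:=a, 5:=b)) \<longleftrightarrow> a = val D w i"
      "sat M (VALF D j 5) (w(4:=a, 5:=b)) \<longleftrightarrow> b = val D w j" if "a \<in> UU" "b \<in> UU" for a b
    proof -
      have gg: "good x (w(4:=a, 5:=b))" using good_upd Eq.prems that by (simp add: good_upd)
      have vv: "val D (w(4:=a, 5:=b)) = val D w" by (simp add: val_upd)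
      show "sat M (VALF D i 4) (w(4:=a, 5:=b)) \<longleftrightarrow> a = val D w i"
        using sat_VALF[OF gg, of 4] vv by simp
      show "sat M (VALF D j 5) (w(4:=a, 5:=b)) \<longleftrightarrow> b = val D w j"
        using sat_VALF[OF gg, of 5] vv by simp
    qed
    then show ?thesis by auto
  qed
  then show ?case using val_in[OF Eq.prems] by auto
next
  case (Ur i)
  have "sat M (tr D (Ur i)) w \<longleftrightarrow> (\<exists>a\<in>UU. a = val D w i \<and> urel M a)"
  proof -
    have "sat M (VALF D i 4) (w(4:=a)) \<longleftrightarrow> a = val D w i" if "a \<in> UU" for a
    proof -
      have gg: "good x (w(4:=a))" using good_upd Ur.prems that by (simp add: good_upd)
      have vv: "val D (w(4:=a)) = val D w" by (simp add: val_upd)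
      show ?thesis using sat_VALF[OF gg, of 4] vv by simp
    qed
    then show ?thesis by auto
  qed
  then show ?case using val_in[OF Ur.prems] by auto
next
  case (Neg p) then show ?case by simp
next
  case (Conj p q) then show ?case by simp
next
  case (Exi n p)
  have "sat M (tr D (Exi n p)) w \<longleftrightarrow> (\<exists>a\<in>UU. sat M (tr (insert n D) p) (w(Ds n := a)))" by simp
  also have "\<dots> \<longleftrightarrow> (\<exists>a\<in>UU. sat M p ((val D w)(n := a)))"
  proof (intro bex_cong refl)
    fix a assume a: "a \<in> UU"
    have gg: "good x (w(Ds n := a))" using good_upd[OF Exi.prems a, of "Ds n"] by simp
    have "val (insert n D) (w(Ds n := a)) = (val D w)(n := a)"
      by (rule ext) (simp add: val_def)
    then show "sat M (tr (insert n D) p) (w(Ds n := a)) = sat M p ((val D w)(n := a))"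
      using Exi.IH[OF gg, of "insert n D"] by (simp only:)
  qed
  finally show ?case by simp
qed

end

definition enc :: "(nat \<Rightarrow> 'a) \<Rightarrow> 'a \<Rightarrow> 'a \<Rightarrow> nat \<Rightarrow> 'a" where
  "enc g y d m = (if m = 9 then y else if 20 \<le> m \<and> even m then g ((m - 20) div 2) else d)"

lemma enc_simps[simp]:
  "enc g y d (Fs k) = g k" "enc g y d 9 = y" "enc g y d (Ds k) = d"
  "m < 20 \<Longrightarrow> m \<noteq> 9 \<Longrightarrow> enc g y d m = d"
  "(enc g y d)(9 := z) = enc g z d"
  unfolding enc_def Fs_def Ds_def by (auto intro!: ext)

definition lt_fm where "lt_fm r a b = Exi 0 (Conj (Mem 0 r) (opair_fm 0 a b 1 2))"

context zfu begin

lemma sat_lt_fm[simp]: "r \<noteq> 0 \<Longrightarrow> a \<noteq> 0 \<Longrightarrow> b \<noteq> 0 \<Longrightarrow> a \<noteq> 1 \<Longrightarrow> b \<noteq> 1 \<Longrightarrow> a \<noteq> 2 \<Longrightarrow> b \<noteq> 2 \<Longrightarrow>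
  sat M (lt_fm r a b) w = ltr (w r) (w a) (w b)"
  unfolding lt_fm_def ltr_def by simp

lemma good_enc: "\<forall>k. g k \<in> UU \<and> is_fun_on M (g k) x \<Longrightarrow> y \<in> UU \<Longrightarrow> E y x \<Longrightarrow> d \<in> UU \<Longrightarrow> good x (enc g y d)"
  unfolding good_def by (auto simp: enc_def) (auto simp: Fs_def)

lemma good_upd': "good x w \<Longrightarrow> a \<in> UU \<Longrightarrow> (\<forall>k. m \<noteq> Fs k) \<Longrightarrow> m \<noteq> 9 \<Longrightarrow> good x (w(m:=a))"
  using good_upd by blast

lemma good_upd9: "good x w \<Longrightarrow> y \<in> UU \<Longrightarrow> E y x \<Longrightarrow> good x (w(9:=y))"
  unfolding good_def by auto

lemma sat_tr0: "good x w \<Longrightarrow> sat M (tr {} \<phi>) w = sat M \<phi> (\<lambda>k. app M (w (Fs k)) (w 9))"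
proof -
  assume g: "good x w"
  have "val {} w = (\<lambda>k. app M (w (Fs k)) (w 9))" by (rule ext) (simp add: val_def)
  then show ?thesis using sat_tr[OF g, of "{}" \<phi>] by simp
qed

lemma sat_trn: "good x w \<Longrightarrow> sat M (tr {n} \<phi>) w = sat M \<phi> ((\<lambda>k. app M (w (Fs k)) (w 9))(n := w (Ds n)))"
proof -
  assume g: "good x w"
  have "val {n} w = (\<lambda>k. app M (w (Fs k)) (w 9))(n := w (Ds n))"
    by (rule ext) (simp add: val_def)
  then show ?thesis using sat_tr[OF g, of "{n}" \<phi>] by simp
qed

end

locale zfuf = zfu +
  fixes F x
  assumes Fin: "F \<in> UU" and xin: "x \<in> UU" and uf: "is_ultrafilter M F x"
begin

lemmas ufu = uf[unfolded is_ultrafilter_def Let_def]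
lemma uf1: "is_set M F" using ufu by blast
lemma uf2: "s \<in> UU \<Longrightarrow> E s F \<Longrightarrow> subset_of M s x" using ufu by blast
lemma uf3: "E x F" using ufu by blast
lemma uf4: "s \<in> UU \<Longrightarrow> E s F \<Longrightarrow> \<exists>t\<in>UU. E t s" using ufu by blast
lemma uf5: "s \<in> UU \<Longrightarrow> t \<in> UU \<Longrightarrow> u \<in> UU \<Longrightarrow> E s F \<Longrightarrow> E t F \<Longrightarrow> is_set M u \<Longrightarrow>
        (\<forall>z\<in>UU. E z u \<longleftrightarrow> E z s \<and> E z t) \<Longrightarrow> E u F" using ufu by blast
lemma uf6: "s \<in> UU \<Longrightarrow> t \<in> UU \<Longrightarrow> E s F \<Longrightarrow> subset_of M t x \<Longrightarrow> (\<forall>z\<in>UU. E z s \<longrightarrow> E z t) \<Longrightarrow> E t F"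
  using ufu by blast
lemma uf7: "s \<in> UU \<Longrightarrow> subset_of M s x \<Longrightarrow> E s F \<or>
        (\<forall>c\<in>UU. is_set M c \<and> (\<forall>z\<in>UU. E z c \<longleftrightarrow> E z x \<and> \<not> E z s) \<longrightarrow> E c F)" using ufu by blast

lemma xset: "is_set M x" using uf2[OF xin uf3] unfolding subset_of_def by blast

definition Sx :: "('a \<Rightarrow> bool) \<Rightarrow> bool" where
  "Sx P \<longleftrightarrow> (\<exists>s\<in>UU. is_set M s \<and> (\<forall>y\<in>UU. E y s \<longleftrightarrow> E y x \<and> P y))"

abbreviation inF where "inF P \<equiv> in_filter M F x P"

lemma inF_set: assumes "s \<in> UU" "is_set M s" "\<forall>y\<in>UU. E y s \<longleftrightarrow> E y x \<and> P y"
  shows "inF P \<longleftrightarrow> E s F"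
proof
  assume "inF P"
  then obtain s' where s': "s' \<in> UU" "E s' F" "is_set M s'" "\<forall>y\<in>UU. E y s' \<longleftrightarrow> E y x \<and> P y"
    unfolding in_filter_def by blast
  have "s' = s" using s' assms by (intro extens) auto
  then show "E s F" using s' by simp
next
  assume "E s F" then show "inF P" using assms unfolding in_filter_def by blast
qed

lemma L_all: "(\<forall>y\<in>UU. E y x \<longrightarrow> P y) \<Longrightarrow> inF P"
  unfolding in_filter_def using xin uf3 xset by blast

lemma L_cong: "(\<forall>y\<in>UU. E y x \<longrightarrow> P y = Q y) \<Longrightarrow> inF P = inF Q"
  unfolding in_filter_def by (intro bex_cong refl) blast

lemma L_mono: assumes "inF P" "Sx Q" "\<forall>y\<in>UU. E y x \<longrightarrow> P y \<longrightarrow> Q y" shows "inF Q"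
proof -
  obtain s where s: "s \<in> UU" "E s F" "is_set M s" "\<forall>y\<in>UU. E y s \<longleftrightarrow> E y x \<and> P y"
    using assms(1) unfolding in_filter_def by blast
  obtain t where t: "t \<in> UU" "is_set M t" "\<forall>y\<in>UU. E y t \<longleftrightarrow> E y x \<and> Q y"
    using assms(2) unfolding Sx_def by blast
  have "E t F" using uf6[OF s(1) t(1) s(2)] t s assms(3) unfolding subset_of_def by blast
  then show ?thesis using inF_set[OF t] by simp
qed

lemma L_conj: assumes "inF P" "inF Q" "Sx (\<lambda>y. P y \<and> Q y)" shows "inF (\<lambda>y. P y \<and> Q y)"
proof -
  obtain s where s: "s \<in> UU" "E s F" "is_set M s" "\<forall>y\<in>UU. E y s \<longleftrightarrow> E y x \<and> P y"
    using assms(1) unfolding in_filter_def by blast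
  obtain s' where s': "s' \<in> UU" "E s' F" "is_set M s'" "\<forall>y\<in>UU. E y s' \<longleftrightarrow> E y x \<and> Q y"
    using assms(2) unfolding in_filter_def by blast
  obtain t where t: "t \<in> UU" "is_set M t" "\<forall>y\<in>UU. E y t \<longleftrightarrow> E y x \<and> P y \<and> Q y"
    using assms(3) unfolding Sx_def by blast
  have "E t F" using uf5[OF s(1) s'(1) t(1) s(2) s'(2) t(2)] t s s' by blast
  then show ?thesis using inF_set[OF t] by simp
qed

lemma L_neg: assumes "Sx P" "Sx (\<lambda>y. \<not> P y)" shows "inF (\<lambda>y. \<not> P y) \<longleftrightarrow> \<not> inF P"
proof -
  obtain s where s: "s \<in> UU" "is_set M s" "\<forall>y\<in>UU. E y s \<longleftrightarrow> E y x \<and> P y"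
    using assms(1) unfolding Sx_def by blast
  obtain t where t: "t \<in> UU" "is_set M t" "\<forall>y\<in>UU. E y t \<longleftrightarrow> E y x \<and> \<not> P y"
    using assms(2) unfolding Sx_def by blast
  obtain e where e: "e \<in> UU" "is_set M e" "\<forall>z\<in>UU. \<not> E z e" using empty_ex by blast
  have "\<not> (E s F \<and> E t F)"
  proof
    assume st: "E s F \<and> E t F"
    have "E e F" using uf5[OF s(1) t(1) e(1)] st e(2,3) s(3) t(3) by blast
    then show False using uf4[OF e(1)] e(3) by blast
  qed
  moreover have "E s F \<or> E t F"
    using uf7[OF s(1)] s t xin unfolding subset_of_def by blast
  ultimately show ?thesis using inF_set[OF s] inF_set[OF t] by blast
qed

lemma sep_los: assumes "\<forall>k. g k \<in> UU \<and> is_fun_on M (g k) x"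
  shows "Sx (\<lambda>y. sat M \<phi> (\<lambda>k. app M (g k) y))"
  unfolding Sx_def
proof (rule sep[where e="enc g x x" and i=9 and \<phi>="tr {} \<phi>"])
  show "\<forall>k. enc g x x k \<in> UU" using assms xin unfolding enc_def by auto
  show "x \<in> UU" by (rule xin)
  fix z assume z: "z \<in> UU" "E z x"
  have "good x (enc g z x)" using good_enc assms z xin by blast
  then show "sat M (tr {} \<phi>) ((enc g x x)(9 := z)) = sat M \<phi> (\<lambda>k. app M (g k) z)"
    by (simp add: sat_tr0)
qed

end

definition lst :: "'a list \<Rightarrow> 'a \<Rightarrow> nat \<Rightarrow> 'a" where
  "lst L d k = (if k < length L then L ! k else d)"

context zfuf begin

abbreviation funs where "funs f \<equiv> f \<in> UU \<and> is_fun_on M f x"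
abbreviation UP where "UP \<equiv> ultrapower M F x"
abbreviation cl where "cl f \<equiv> cls M F x f"
abbreviation ap where "ap f y \<equiv> app M f y"

lemma Sx_list: assumes "\<forall>f\<in>set L. funs f" "funs d"
  shows "Sx (\<lambda>y. sat M \<phi> (\<lambda>k. ap (lst L d k) y))"
  by (rule sep_los) (use assms in \<open>auto simp: lst_def\<close>)

lemma cls_mem: "funs f \<Longrightarrow> f \<in> cl f"
  unfolding cls_def by (auto intro: L_all)

lemma cls_iff: "g \<in> cl f \<longleftrightarrow> funs g \<and> inF (\<lambda>y. ap f y = ap g y)"
  unfolding cls_def by auto

lemma eq_trans: assumes "funs f" "funs h" "funs k" "inF (\<lambda>y. ap f y = ap h y)" "inF (\<lambda>y. ap f y = ap k y)"
  shows "inF (\<lambda>y. ap h y = ap k y)"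
proof -
  have s1: "Sx (\<lambda>y. ap f y = ap h y \<and> ap f y = ap k y)"
    using Sx_list[of "[f,h,k]" f "Conj (Eq 0 1) (Eq 0 2)"] assms by (simp add: lst_def)
  have s2: "Sx (\<lambda>y. ap h y = ap k y)"
    using Sx_list[of "[h,k]" f "Eq 0 1"] assms by (simp add: lst_def)
  have "inF (\<lambda>y. ap f y = ap h y \<and> ap f y = ap k y)" by (rule L_conj[OF assms(4,5) s1])
  then show ?thesis by (rule L_mono[OF _ s2]) auto
qed

lemma eq_sym: "inF (\<lambda>y. ap f y = ap h y) \<Longrightarrow> inF (\<lambda>y. ap h y = ap f y)"
proof -
  assume a: "inF (\<lambda>y. ap f y = ap h y)"
  have "\<forall>y\<in>UU. E y x \<longrightarrow> (ap f y = ap h y) = (ap h y = ap f y)" by auto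
  from L_cong[OF this] a show ?thesis by simp
qed

lemma cls_eq: assumes "funs f" "funs h" shows "cl f = cl h \<longleftrightarrow> inF (\<lambda>y. ap f y = ap h y)"
proof
  assume "cl f = cl h"
  then have "h \<in> cl f" using cls_mem assms by auto
  then show "inF (\<lambda>y. ap f y = ap h y)" using cls_iff by auto
next
  assume a: "inF (\<lambda>y. ap f y = ap h y)"
  have a': "inF (\<lambda>y. ap h y = ap f y)" using eq_sym[OF a] .
  show "cl f = cl h"
  proof (intro set_eqI iffI)
    fix k assume "k \<in> cl f"
    then have k: "funs k" "inF (\<lambda>y. ap f y = ap k y)" using cls_iff by auto
    then show "k \<in> cl h" using eq_trans[OF assms k(1) a k(2)] cls_iff by auto
  next
    fix k assume "k \<in> cl h"
    then have k: "funs k" "inF (\<lambda>y. ap h y = ap k y)" using cls_iff by auto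
    then show "k \<in> cl f" using eq_trans[OF assms(2,1) k(1) a' k(2)] cls_iff by auto
  qed
qed

lemma memb_UP: assumes "funs f" "funs h"
  shows "memb UP (cl f) (cl h) \<longleftrightarrow> inF (\<lambda>y. E (ap f y) (ap h y))"
proof
  assume "memb UP (cl f) (cl h)"
  then obtain g f' where g: "g \<in> cl f" "f' \<in> cl h" "inF (\<lambda>y. E (ap g y) (ap f' y))"
    unfolding ultrapower_def by auto
  have g1: "funs g" "inF (\<lambda>y. ap f y = ap g y)" using g(1) cls_iff by auto
  have g2: "funs f'" "inF (\<lambda>y. ap h y = ap f' y)" using g(2) cls_iff by auto
  have s1: "Sx (\<lambda>y. ap h y = ap f' y \<and> E (ap g y) (ap f' y))"
    using Sx_list[of "[f,g,h,f']" f "Conj (Eq 2 3) (Mem 1 3)"] assms g1 g2 by (simp add: lst_def)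
  have s2: "Sx (\<lambda>y. ap f y = ap g y \<and> ap h y = ap f' y \<and> E (ap g y) (ap f' y))"
    using Sx_list[of "[f,g,h,f']" f "Conj (Eq 0 1) (Conj (Eq 2 3) (Mem 1 3))"] assms g1 g2 by (simp add: lst_def)
  have s3: "Sx (\<lambda>y. E (ap f y) (ap h y))"
    using Sx_list[of "[f,h]" f "Mem 0 1"] assms by (simp add: lst_def)
  have "inF (\<lambda>y. ap h y = ap f' y \<and> E (ap g y) (ap f' y))" by (rule L_conj[OF g2(2) g(3) s1])
  then have "inF (\<lambda>y. ap f y = ap g y \<and> ap h y = ap f' y \<and> E (ap g y) (ap f' y))"
    by (rule L_conj[OF g1(2) _ s2])
  then show "inF (\<lambda>y. E (ap f y) (ap h y))" by (rule L_mono[OF _ s3]) auto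
next
  assume "inF (\<lambda>y. E (ap f y) (ap h y))"
  then show "memb UP (cl f) (cl h)" unfolding ultrapower_def using cls_mem assms by auto
qed

lemma urel_UP: assumes "funs f"
  shows "urel UP (cl f) \<longleftrightarrow> inF (\<lambda>y. urel M (ap f y))"
proof
  assume "urel UP (cl f)"
  then obtain g where g: "g \<in> cl f" "inF (\<lambda>y. urel M (ap g y))"
    unfolding ultrapower_def by auto
  have g1: "funs g" "inF (\<lambda>y. ap f y = ap g y)" using g(1) cls_iff by auto
  have s2: "Sx (\<lambda>y. ap f y = ap g y \<and> urel M (ap g y))"
    using Sx_list[of "[f,g]" f "Conj (Eq 0 1) (Ur 1)"] assms g1 by (simp add: lst_def)
  have s3: "Sx (\<lambda>y. urel M (ap f y))"
    using Sx_list[of "[f]" f "Ur 0"] assms by (simp add: lst_def)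
  have "inF (\<lambda>y. ap f y = ap g y \<and> urel M (ap g y))" by (rule L_conj[OF g1(2) g(2) s2])
  then show "inF (\<lambda>y. urel M (ap f y))" by (rule L_mono[OF _ s3]) auto
next
  assume "inF (\<lambda>y. urel M (ap f y))"
  then show "urel UP (cl f)" unfolding ultrapower_def using cls_mem assms by auto
qed

lemma univ_UP: "C \<in> univ UP \<longleftrightarrow> (\<exists>f. funs f \<and> C = cl f)"
  unfolding ultrapower_def by auto

end

definition Rfm :: "nat \<Rightarrow> fm \<Rightarrow> fm" where
  "Rfm n \<phi> = Conj (Mem 14 11) (Dis (Conj (Exi (Ds n) (Conj (Eq (Ds n) 14) (tr {n} \<phi>)))
      (All (Ds n) (Imp (Conj (Mem (Ds n) 11) (lt_fm 12 (Ds n) 14)) (Neg (tr {n} \<phi>)))))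
     (Conj (Neg (Exi (Ds n) (Conj (Mem (Ds n) 11) (tr {n} \<phi>)))) (Eq 14 13)))"

definition Hfm :: "nat \<Rightarrow> fm \<Rightarrow> fm" where
  "Hfm n \<phi> = Exi 9 (Conj (Mem 9 10) (Exi 14 (Conj (opair_fm 0 9 14 1 2) (Rfm n \<phi>))))"

context zfuf begin

lemma witness:
  assumes Coll: "Collection M" and g: "\<forall>k. funs (g k)"
    and inf: "inF (\<lambda>y. \<exists>a\<in>UU. sat M \<phi> ((\<lambda>k. ap (g k) y)(n := a)))"
  shows "\<exists>h. funs h \<and> inF (\<lambda>y. sat M \<phi> ((\<lambda>k. ap (g k) y)(n := ap h y)))"
proof -
  define Q where "Q y b = sat M \<phi> ((\<lambda>k. ap (g k) y)(n := b))" for y b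
  obtain y0 where y0: "y0 \<in> UU" "E y0 x" using uf4[OF xin uf3] by blast
  have TQ: "sat M (tr {n} \<phi>) w = Q (w 9) (w (Ds n))" if "good x w" "\<forall>k. w (Fs k) = g k" for w
    using sat_trn[OF that(1)] that(2) unfolding Q_def by simp
  obtain s where s: "s \<in> UU" "E s F" "is_set M s" "\<forall>y\<in>UU. E y s \<longleftrightarrow> E y x \<and> (\<exists>a\<in>UU. Q y a)"
    using inf unfolding in_filter_def Q_def by blast
  have genc: "good x (enc g y y0)" if "y \<in> UU" "E y x" for y
    using good_enc[of g x y y0] g that y0 by blast
  have "\<exists>v\<in>UU. \<forall>y\<in>UU. E y s \<longrightarrow> (\<exists>a\<in>UU. E a v \<and> sat M (tr {n} \<phi>) ((enc g y0 y0)(9 := y, Ds n := a)))"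
  proof (rule Coll[unfolded Collection_def, rule_format])
    show "9 \<noteq> Ds n" by simp
    show "enc g y0 y0 k \<in> UU" for k using g y0 unfolding enc_def by auto
    show "s \<in> UU" by fact
    fix y assume y: "y \<in> UU" "E y s"
    then have yx: "E y x" "\<exists>a\<in>UU. Q y a" using s by auto
    then obtain a where a: "a \<in> UU" "Q y a" by blast
    have "good x ((enc g y0 y0)(9 := y, Ds n := a))"
      using genc[OF y(1) yx(1)] a by (simp add: good_upd')
    then have "sat M (tr {n} \<phi>) ((enc g y0 y0)(9 := y, Ds n := a))" using TQ a by simp
    then show "\<exists>a\<in>UU. sat M (tr {n} \<phi>) ((enc g y0 y0)(9 := y, Ds n := a))" using a by blast
  qed
  then obtain v where v: "v \<in> UU" "\<forall>y\<in>UU. E y s \<longrightarrow> (\<exists>a\<in>UU. E a v \<and> Q y a)"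
  proof -
    assume r: "\<And>v. v \<in> UU \<Longrightarrow> \<forall>y\<in>UU. E y s \<longrightarrow> (\<exists>a\<in>UU. E a v \<and> Q y a) \<Longrightarrow> thesis"
    obtain v where v: "v \<in> UU" "\<forall>y\<in>UU. E y s \<longrightarrow> (\<exists>a\<in>UU. E a v \<and> sat M (tr {n} \<phi>) ((enc g y0 y0)(9 := y, Ds n := a)))"
      using \<open>\<exists>v\<in>UU. _\<close> by blast
    have "\<forall>y\<in>UU. E y s \<longrightarrow> (\<exists>a\<in>UU. E a v \<and> Q y a)"
    proof (intro ballI impI)
      fix y assume y: "y \<in> UU" "E y s"
      then have yx: "E y x" using s by auto
      obtain a where a: "a \<in> UU" "E a v" "sat M (tr {n} \<phi>) ((enc g y0 y0)(9 := y, Ds n := a))"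
        using v y by blast
      have "good x ((enc g y0 y0)(9 := y, Ds n := a))"
        using genc[OF y(1) yx] a by (simp add: good_upd')
      then have "Q y a" using TQ a by simp
      then show "\<exists>a\<in>UU. E a v \<and> Q y a" using a by blast
    qed
    then show thesis using r v by blast
  qed
  obtain y1 where y1: "y1 \<in> UU" "E y1 s" using uf4[OF s(1,2)] by blast
  obtain a0 where a0: "a0 \<in> UU" "E a0 v" using v y1 by blast
  have vset: "is_set M v" using mem_set[OF v(1) a0(1,2)] .
  obtain r where r: "r \<in> UU"
     "\<forall>a\<in>UU. \<forall>b\<in>UU. E a v \<and> E b v \<longrightarrow> ltr r a b \<or> a = b \<or> ltr r b a"
     "\<forall>s\<in>UU. subset_of M s v \<and> (\<exists>t\<in>UU. E t s) \<longrightarrow> (\<exists>a\<in>UU. E a s \<and> (\<forall>b\<in>UU. E b s \<longrightarrow> \<not> ltr r b a))"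
    using choice_ax[OF v(1) vset] by blast
  obtain B where B: "B \<in> UU" "\<forall>a\<in>UU. \<forall>b\<in>UU. \<forall>p\<in>UU. E a x \<longrightarrow> E b v \<longrightarrow> is_opair M p a b \<longrightarrow> E p B"
    using pairs_big[OF xin v(1)] by blast
  define e' where "e' = (enc g y0 x)(10:=x, 11:=v, 12:=r, 13:=a0)"
  have e'v: "e' 10 = x" "e' 11 = v" "e' 12 = r" "e' 13 = a0" "\<And>k. e' (Fs k) = g k" "e' 9 = y0"
    unfolding e'_def by simp_all
  have e'g: "good x e'" unfolding e'_def using good_enc[of g x y0 x] g y0 xin v(1) r(1) a0(1) by (simp add: good_upd')
  have e'U: "\<forall>k. e' k \<in> UU" using e'g unfolding good_def by blast
  define Rm where "Rm y a \<longleftrightarrow> E a v \<and> ((Q y a \<and> (\<forall>b\<in>UU. E b v \<and> ltr r b a \<longrightarrow> \<not> Q y b))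
        \<or> (\<not> (\<exists>b\<in>UU. E b v \<and> Q y b) \<and> a = a0))" for y a
  have Rfm_eq: "sat M (Rfm n \<phi>) (e'(0:=p, 9:=y, 14:=a)) \<longleftrightarrow> Rm y a"
    if py: "p \<in> UU" "y \<in> UU" "E y x" "a \<in> UU" for p y a
  proof -
    have gw: "good x (e'(0:=p, 9:=y, 14:=a, Ds n := b))" if "b \<in> UU" for b
      using e'g py that by (simp add: good_upd' good_upd9)
    have TRb: "sat M (tr {n} \<phi>) ((e'(0:=p, 9:=y, 14:=a))(Ds n := b)) = Q y b" if "b \<in> UU" for b
      using TQ[OF gw[OF that]] e'v by simp
    show ?thesis unfolding Rfm_def Rm_def using py e'v
      by (simp add: TRb cong: conj_cong)
  qed
  have Hsep: "\<exists>h\<in>UU. is_set M h \<and> (\<forall>p\<in>UU. E p h \<longleftrightarrow> E p B \<and> (\<exists>y\<in>UU. E y x \<and> (\<exists>a\<in>UU. is_opair M p y a \<and> Rm y a)))"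
  proof (rule sep[where e=e' and i=0 and \<phi>="Hfm n \<phi>"])
    show "\<forall>k. e' k \<in> UU" by (rule e'U)
    show "B \<in> UU" by (rule B(1))
    fix p assume p: "p \<in> UU" "E p B"
    have "sat M (Hfm n \<phi>) (e'(0 := p)) \<longleftrightarrow>
       (\<exists>y\<in>UU. E y x \<and> (\<exists>a\<in>UU. is_opair M p y a \<and> sat M (Rfm n \<phi>) (e'(0:=p, 9:=y, 14:=a))))"
      unfolding Hfm_def using p e'v by simp
    also have "\<dots> \<longleftrightarrow> (\<exists>y\<in>UU. E y x \<and> (\<exists>a\<in>UU. is_opair M p y a \<and> Rm y a))"
      by (intro bex_cong refl conj_cong) (simp add: Rfm_eq p(1))
    finally show "sat M (Hfm n \<phi>) (e'(0 := p)) \<longleftrightarrow> (\<exists>y\<in>UU. E y x \<and> (\<exists>a\<in>UU. is_opair M p y a \<and> Rm y a))" .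
  qed
  then obtain h where h: "h \<in> UU" "is_set M h"
      "\<forall>p\<in>UU. E p h \<longleftrightarrow> E p B \<and> (\<exists>y\<in>UU. E y x \<and> (\<exists>a\<in>UU. is_opair M p y a \<and> Rm y a))"
    by blast
  have hm: "\<forall>p\<in>UU. E p h \<longleftrightarrow> (\<exists>y\<in>UU. \<exists>a\<in>UU. E y x \<and> is_opair M p y a \<and> Rm y a)"
    using h(3) B(2) unfolding Rm_def by blast
  have ex: "\<forall>y\<in>UU. E y x \<longrightarrow> (\<exists>a\<in>UU. Rm y a)"
  proof (intro ballI impI)
    fix y assume y: "y \<in> UU" "E y x"
    show "\<exists>a\<in>UU. Rm y a"
    proof (cases "\<exists>b\<in>UU. E b v \<and> Q y b")
      case True
      have "\<exists>T\<in>UU. is_set M T \<and> (\<forall>z\<in>UU. E z T \<longleftrightarrow> E z v \<and> Q y z)"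
      proof (rule sep[where e="enc g y y0" and i="Ds n" and \<phi>="tr {n} \<phi>"])
        show "\<forall>k. enc g y y0 k \<in> UU" using genc[OF y] unfolding good_def by blast
        show "v \<in> UU" by fact
        fix z assume "z \<in> UU" "E z v"
        then have "good x ((enc g y y0)(Ds n := z))" using good_upd'[OF genc[OF y]] by simp
        then show "sat M (tr {n} \<phi>) ((enc g y y0)(Ds n := z)) = Q y z" using TQ by simp
      qed
      then obtain T where T: "T \<in> UU" "is_set M T" "\<forall>z\<in>UU. E z T \<longleftrightarrow> E z v \<and> Q y z" by blast
      have "subset_of M T v \<and> (\<exists>t\<in>UU. E t T)" using T True unfolding subset_of_def by blast
      then obtain a where a: "a \<in> UU" "E a T" "\<forall>b\<in>UU. E b T \<longrightarrow> \<not> ltr r b a" using r(3) T(1) by blast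
      have "Rm y a" unfolding Rm_def using a T by blast
      then show ?thesis using a by blast
    next
      case False
      then have "Rm y a0" unfolding Rm_def using a0 by blast
      then show ?thesis using a0 by blast
    qed
  qed
  have un: "\<forall>y\<in>UU. E y x \<longrightarrow> (\<forall>b1\<in>UU. \<forall>b2\<in>UU. Rm y b1 \<longrightarrow> Rm y b2 \<longrightarrow> b1 = b2)"
  proof (intro ballI impI)
    fix y b1 b2 assume b: "y \<in> UU" "b1 \<in> UU" "b2 \<in> UU" "Rm y b1" "Rm y b2"
    have "E b1 v" "E b2 v" using b unfolding Rm_def by auto
    then have "ltr r b1 b2 \<or> b1 = b2 \<or> ltr r b2 b1" using r(2) b by blast
    then show "b1 = b2" using b unfolding Rm_def by blast
  qed
  have hf: "is_fun_on M h x" and hR: "\<forall>a\<in>UU. E a x \<longrightarrow> Rm a (app M h a)"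
    using mk_fun[OF xin h(1,2) hm ex un] by blast+
  have g': "\<forall>k. funs ((g(n := h)) k)" using g h(1) hf by simp
  have Sx': "Sx (\<lambda>y. sat M \<phi> ((\<lambda>k. ap (g k) y)(n := ap h y)))"
  proof -
    have "(\<lambda>k. ap ((g(n := h)) k) y) = (\<lambda>k. ap (g k) y)(n := ap h y)" for y by (rule ext) simp
    then show ?thesis using sep_los[OF g', of \<phi>] by simp
  qed
  have "inF (\<lambda>y. \<exists>a\<in>UU. Q y a)" using inf unfolding Q_def .
  then have "inF (\<lambda>y. sat M \<phi> ((\<lambda>k. ap (g k) y)(n := ap h y)))"
  proof (rule L_mono[OF _ Sx'], intro ballI impI)
    fix y assume y: "y \<in> UU" "E y x" "\<exists>a\<in>UU. Q y a"
    then have "E y s" using s by blast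
    then obtain a where "a \<in> UU" "E a v" "Q y a" using v y by blast
    then have "Q y (ap h y)" using hR y unfolding Rm_def by blast
    then show "sat M \<phi> ((\<lambda>k. ap (g k) y)(n := ap h y))" unfolding Q_def .
  qed
  then show ?thesis using h(1) hf by blast
qed

lemma los: assumes Coll: "Collection M" and g: "\<forall>i. funs (g i)"
  shows "sat UP \<phi> (\<lambda>i. cl (g i)) \<longleftrightarrow> inF (\<lambda>y. sat M \<phi> (\<lambda>i. ap (g i) y))"
  using g
proof (induction \<phi> arbitrary: g)
  case (Mem i j) then show ?case using memb_UP by simp
next
  case (Eq i j) then show ?case using cls_eq by simp
next
  case (Ur i) then show ?case using urel_UP by simp
next
  case (Neg p)
  have "inF (\<lambda>y. \<not> sat M p (\<lambda>i. ap (g i) y)) \<longleftrightarrow> \<not> inF (\<lambda>y. sat M p (\<lambda>i. ap (g i) y))"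
    using L_neg[OF sep_los[OF Neg.prems, of p]] sep_los[OF Neg.prems, of "Neg p"] by simp
  then show ?case using Neg.IH[OF Neg.prems] by simp
next
  case (Conj p q)
  let ?P = "\<lambda>y. sat M p (\<lambda>i. ap (g i) y)" and ?Q = "\<lambda>y. sat M q (\<lambda>i. ap (g i) y)"
  have sP: "Sx ?P" "Sx ?Q" using sep_los[OF Conj.prems] by blast+
  have sPQ: "Sx (\<lambda>y. ?P y \<and> ?Q y)" using sep_los[OF Conj.prems, of "Conj p q"] by simp
  have "inF (\<lambda>y. ?P y \<and> ?Q y) \<longleftrightarrow> inF ?P \<and> inF ?Q"
  proof
    assume a: "inF (\<lambda>y. ?P y \<and> ?Q y)"
    show "inF ?P \<and> inF ?Q"
    proof
      show "inF ?P" by (rule L_mono[OF a sP(1)]) blast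
      show "inF ?Q" by (rule L_mono[OF a sP(2)]) blast
    qed
  next
    assume "inF ?P \<and> inF ?Q"
    then show "inF (\<lambda>y. ?P y \<and> ?Q y)" using L_conj sPQ by blast
  qed
  then show ?case using Conj.IH[OF Conj.prems] Conj.prems by simp
next
  case (Exi n p)
  let ?v = "\<lambda>y. (\<lambda>i. ap (g i) y)"
  have "sat UP (Exi n p) (\<lambda>i. cl (g i)) \<longleftrightarrow> (\<exists>h. funs h \<and> sat UP p ((\<lambda>i. cl (g i))(n := cl h)))"
    using univ_UP by auto
  also have "\<dots> \<longleftrightarrow> (\<exists>h. funs h \<and> inF (\<lambda>y. sat M p ((?v y)(n := ap h y))))"
  proof (intro ex_cong1 conj_cong refl)
    fix h assume h: "funs h"
    have g': "\<forall>i. funs ((g(n:=h)) i)" using Exi.prems h by simp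
    have e1: "(\<lambda>i. cl (g i))(n := cl h) = (\<lambda>i. cl ((g(n:=h)) i))" by (rule ext) simp
    have e2: "(\<lambda>i. ap ((g(n:=h)) i) y) = (?v y)(n := ap h y)" for y by (rule ext) simp
    show "sat UP p ((\<lambda>i. cl (g i))(n := cl h)) \<longleftrightarrow> inF (\<lambda>y. sat M p ((?v y)(n := ap h y)))"
      using Exi.IH[OF g'] e1 e2 by simp
  qed
  also have "\<dots> \<longleftrightarrow> inF (\<lambda>y. \<exists>a\<in>UU. sat M p ((?v y)(n := a)))"
  proof
    assume "\<exists>h. funs h \<and> inF (\<lambda>y. sat M p ((?v y)(n := ap h y)))"
    then obtain h where h: "funs h" "inF (\<lambda>y. sat M p ((?v y)(n := ap h y)))" by blast
    have sx: "Sx (\<lambda>y. \<exists>a\<in>UU. sat M p ((?v y)(n := a)))"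
      using sep_los[OF Exi.prems, of "Exi n p"] by simp
    show "inF (\<lambda>y. \<exists>a\<in>UU. sat M p ((?v y)(n := a)))"
      by (rule L_mono[OF h(2) sx]) (use h(1) fun_app(1) in blast)
  next
    assume "inF (\<lambda>y. \<exists>a\<in>UU. sat M p ((?v y)(n := a)))"
    then show "\<exists>h. funs h \<and> inF (\<lambda>y. sat M p ((?v y)(n := ap h y)))"
      using witness[OF Coll Exi.prems] by blast
  qed
  finally show ?case by simp
qed

lemma Los_holds: "Collection M \<Longrightarrow> Los M F x"
  unfolding Los_def using los by blast

end

definition subset_fm where "subset_fm s x t = Conj (Neg (Ur s)) (All t (Imp (Mem t s) (Mem t x)))"
definition sub_fm where "sub_fm K H z = All z (Imp (Mem z K) (Mem z H))"
definition seg_fm where "seg_fm H G = Dis (Eq H G) (lt_fm 4 H G)"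
definition good_fm where
  "good_fm Y G = Conj (subset_fm Y 3 23) (Conj (All 20 (Imp (Mem 20 Y) (seg_fm 20 G)))
     (All 20 (Imp (Conj (Mem 20 3) (seg_fm 20 G))
        (Iff (Mem 20 Y) (All 21 (Imp (Conj (Mem 21 Y) (lt_fm 4 21 20)) (sub_fm 21 20 22)))))))"

context zfu begin

lemma sat_subset_fm[simp]: "s \<noteq> t \<Longrightarrow> x \<noteq> t \<Longrightarrow> v s \<in> UU \<Longrightarrow> sat M (subset_fm s x t) v = subset_of M (v s) (v x)"
  unfolding subset_fm_def subset_of_def is_set_def by simp

lemma sat_sub_fm[simp]: "K \<noteq> z \<Longrightarrow> H \<noteq> z \<Longrightarrow> sat M (sub_fm K H z) v = (\<forall>c\<in>UU. E c (v K) \<longrightarrow> E c (v H))"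
  unfolding sub_fm_def by simp

lemma sat_seg_fm[simp]: "H \<notin> {0,1,2} \<Longrightarrow> G \<notin> {0,1,2} \<Longrightarrow> sat M (seg_fm H G) v = (v H = v G \<or> ltr (v 4) (v H) (v G))"
  unfolding seg_fm_def by simp

end

locale trf = zfu +
  fixes P r PP
  assumes Pin: "P \<in> UU" and Pset: "is_set M P" and rin: "r \<in> UU" and PPin: "PP \<in> UU"
    and PPall: "\<forall>Y\<in>UU. subset_of M Y P \<longrightarrow> E Y PP"
    and irr: "\<forall>a\<in>UU. E a P \<longrightarrow> \<not> ltr r a a"
    and trn: "\<forall>a\<in>UU. \<forall>b\<in>UU. \<forall>c\<in>UU. E a P \<and> E b P \<and> E c P \<and> ltr r a b \<and> ltr r b c \<longrightarrow> ltr r a c"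
    and tot: "\<forall>a\<in>UU. \<forall>b\<in>UU. E a P \<and> E b P \<longrightarrow> ltr r a b \<or> a = b \<or> ltr r b a"
    and wfm: "\<forall>s\<in>UU. subset_of M s P \<and> (\<exists>t\<in>UU. E t s) \<longrightarrow> (\<exists>a\<in>UU. E a s \<and> (\<forall>b\<in>UU. E b s \<longrightarrow> \<not> ltr r b a))"
begin

definition seg where "seg H G \<longleftrightarrow> H = G \<or> ltr r H G"
definition sub where "sub K H \<longleftrightarrow> (\<forall>z\<in>UU. E z K \<longrightarrow> E z H)"
definition goodY where "goodY Y G \<longleftrightarrow> subset_of M Y P \<and> (\<forall>H\<in>UU. E H Y \<longrightarrow> seg H G) \<and>
   (\<forall>H\<in>UU. E H P \<and> seg H G \<longrightarrow> (E H Y \<longleftrightarrow> (\<forall>K\<in>UU. E K Y \<and> ltr r K H \<longrightarrow> sub K H)))"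

lemma sat_good_fm[simp]:
  assumes "v 3 = P" "v 4 = r" "v Y \<in> UU" "Y \<notin> {0,1,2,3,4,20,21,22,23}" "G \<notin> {0,1,2,3,4,20,21,22,23}"
  shows "sat M (good_fm Y G) v = goodY (v Y) (v G)"
  using assms unfolding good_fm_def goodY_def seg_def sub_def by simp

definition inX where "inX H \<longleftrightarrow> (\<exists>Y\<in>UU. E Y PP \<and> goodY Y H \<and> E H Y)"

definition inX_fm where "inX_fm K = Exi 7 (Conj (Mem 7 5) (Conj (good_fm 7 K) (Mem K 7)))"

lemma sat_inX_fm[simp]:
  assumes "v 3 = P" "v 4 = r" "v 5 = PP" "K \<notin> {0,1,2,3,4,5,7,20,21,22,23}"
  shows "sat M (inX_fm K) v = inX (v K)"
  using assms unfolding inX_fm_def inX_def by simp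

lemma seg_trans: "a \<in> UU \<Longrightarrow> b \<in> UU \<Longrightarrow> c \<in> UU \<Longrightarrow> E a P \<Longrightarrow> E b P \<Longrightarrow> E c P \<Longrightarrow>
   seg a b \<Longrightarrow> seg b c \<Longrightarrow> seg a c"
  unfolding seg_def using trn by blast

lemma lt_seg: "a \<in> UU \<Longrightarrow> b \<in> UU \<Longrightarrow> c \<in> UU \<Longrightarrow> E a P \<Longrightarrow> E b P \<Longrightarrow> E c P \<Longrightarrow>
   ltr r a b \<Longrightarrow> seg b c \<Longrightarrow> ltr r a c"
  unfolding seg_def using trn by blast

lemma goodP: "goodY Y G \<Longrightarrow> K \<in> UU \<Longrightarrow> E K Y \<Longrightarrow> E K P"
  unfolding goodY_def subset_of_def by blast

lemma coherence:
  assumes Y: "goodY Y G" "Y \<in> UU" and Y': "goodY Y' G'" "Y' \<in> UU"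
    and G: "G \<in> UU" "G' \<in> UU" "E G P" "E G' P" "seg G G'"
  shows "\<forall>H\<in>UU. E H P \<and> seg H G \<longrightarrow> (E H Y \<longleftrightarrow> E H Y')"
proof (rule ccontr)
  assume nc: "\<not> ?thesis"
  have "\<exists>D\<in>UU. is_set M D \<and> (\<forall>z\<in>UU. E z D \<longleftrightarrow> E z P \<and> (seg z G \<and> \<not> (E z Y \<longleftrightarrow> E z Y')))"
    by (rule sep[where e="(\<lambda>_. P)(3:=P, 4:=r, 5:=PP, 8:=G, 9:=Y, 10:=Y')" and i=6
          and \<phi>="Conj (seg_fm 6 8) (Neg (Iff (Mem 6 9) (Mem 6 10)))"])
       (use Pin rin PPin G Y Y' in \<open>auto simp: seg_def\<close>)
  then obtain D where D: "D \<in> UU" "is_set M D" "\<forall>z\<in>UU. E z D \<longleftrightarrow> E z P \<and> (seg z G \<and> \<not> (E z Y \<longleftrightarrow> E z Y'))"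
    by blast
  have "subset_of M D P \<and> (\<exists>t\<in>UU. E t D)" using D nc unfolding subset_of_def by blast
  then obtain H0 where H0: "H0 \<in> UU" "E H0 D" "\<forall>b\<in>UU. E b D \<longrightarrow> \<not> ltr r b H0" using wfm D(1) by blast
  have H0P: "E H0 P" "seg H0 G" "\<not> (E H0 Y \<longleftrightarrow> E H0 Y')" using D H0 by auto
  have H0G': "seg H0 G'" using seg_trans[OF H0(1) G(1,2) H0P(1) G(3,4) H0P(2) G(5)] .
  have e1: "E H0 Y \<longleftrightarrow> (\<forall>K\<in>UU. E K Y \<and> ltr r K H0 \<longrightarrow> sub K H0)"
    using Y(1) H0 H0P unfolding goodY_def by blast
  have e2: "E H0 Y' \<longleftrightarrow> (\<forall>K\<in>UU. E K Y' \<and> ltr r K H0 \<longrightarrow> sub K H0)"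
    using Y'(1) H0 H0P H0G' unfolding goodY_def by blast
  have agree: "E K Y \<longleftrightarrow> E K Y'" if K: "K \<in> UU" "ltr r K H0" "E K P" for K
  proof -
    have "seg K G" using lt_seg[OF K(1) H0(1) G(1) K(3) H0P(1) G(3) K(2) H0P(2)] unfolding seg_def by blast
    then show ?thesis using H0(3) D(3) K by blast
  qed
  have "E H0 Y \<longleftrightarrow> E H0 Y'"
    unfolding e1 e2 using agree goodP[OF Y(1)] goodP[OF Y'(1)] by blast
  then show False using H0P(3) by blast
qed

lemma good_ex: "G \<in> UU \<Longrightarrow> E G P \<Longrightarrow> \<exists>Y\<in>UU. goodY Y G"
proof (rule ccontr)
  assume G: "G \<in> UU" "E G P" and nex: "\<not> (\<exists>Y\<in>UU. goodY Y G)"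
  have "\<exists>Bd\<in>UU. is_set M Bd \<and> (\<forall>z\<in>UU. E z Bd \<longleftrightarrow> E z P \<and> \<not> (\<exists>Y\<in>UU. E Y PP \<and> goodY Y z))"
    by (rule sep[where e="(\<lambda>_. P)(3:=P, 4:=r, 5:=PP)" and i=6
          and \<phi>="Neg (Exi 7 (Conj (Mem 7 5) (good_fm 7 6)))"])
       (use Pin rin PPin in \<open>auto\<close>)
  then obtain Bd where Bd: "Bd \<in> UU" "is_set M Bd" "\<forall>z\<in>UU. E z Bd \<longleftrightarrow> E z P \<and> \<not> (\<exists>Y\<in>UU. E Y PP \<and> goodY Y z)"
    by blast
  have "subset_of M Bd P \<and> (\<exists>t\<in>UU. E t Bd)" using Bd G nex unfolding subset_of_def by blast
  then obtain G0 where G0: "G0 \<in> UU" "E G0 Bd" "\<forall>b\<in>UU. E b Bd \<longrightarrow> \<not> ltr r b G0" using wfm Bd(1) by blast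
  have G0P: "E G0 P" "\<not> (\<exists>Y\<in>UU. E Y PP \<and> goodY Y G0)" using Bd G0 by auto
  have below: "\<exists>Y\<in>UU. goodY Y H" if H: "H \<in> UU" "E H P" "ltr r H G0" for H
    using G0(3) Bd(3) H by blast
  have inX_iff: "inX K \<longleftrightarrow> E K Y" if "K \<in> UU" "E K P" "goodY Y K" "Y \<in> UU" for K Y
  proof
    assume "inX K"
    then obtain Y' where "Y' \<in> UU" "goodY Y' K" "E K Y'" unfolding inX_def by blast
    then show "E K Y" using coherence[OF that(3,4) \<open>goodY Y' K\<close> \<open>Y' \<in> UU\<close> that(1,1,2,2)] that
      unfolding seg_def by blast
  next
    assume "E K Y" then show "inX K" unfolding inX_def using that PPall unfolding goodY_def by blast
  qed
  have aux2: "E K YH \<longleftrightarrow> inX K" if H: "H \<in> UU" "E H P" "ltr r H G0" "goodY YH H" "YH \<in> UU"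
     and K: "K \<in> UU" "E K P" "seg K H" for H YH K
  proof -
    have "ltr r K G0" using K H lt_seg[OF K(1) H(1) G0(1) K(2) H(2) G0P(1)] unfolding seg_def by blast
    then obtain YK where YK: "YK \<in> UU" "goodY YK K" using below K by blast
    have "E K YK \<longleftrightarrow> E K YH" using coherence[OF YK(2,1) H(4,5) K(1) H(1) K(2) H(2) K(3)] K unfolding seg_def by blast
    then show ?thesis using inX_iff[OF K(1,2) YK(2,1)] by blast
  qed
  have "\<exists>Y0\<in>UU. is_set M Y0 \<and> (\<forall>z\<in>UU. E z Y0 \<longleftrightarrow> E z P \<and> ((ltr r z G0 \<and> inX z) \<or>
       (z = G0 \<and> (\<forall>K\<in>UU. E K P \<and> ltr r K G0 \<and> inX K \<longrightarrow> sub K G0))))"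
    by (rule sep[where e="(\<lambda>_. P)(3:=P, 4:=r, 5:=PP, 8:=G0)" and i=6
          and \<phi>="Dis (Conj (lt_fm 4 6 8) (inX_fm 6))
                 (Conj (Eq 6 8) (All 9 (Imp (Conj (Mem 9 3) (Conj (lt_fm 4 9 8) (inX_fm 9))) (sub_fm 9 8 22))))"])
       (use Pin rin PPin G0 in \<open>auto simp: sub_def\<close>)
  then obtain Y0 where Y0: "Y0 \<in> UU" "is_set M Y0" "\<forall>z\<in>UU. E z Y0 \<longleftrightarrow> E z P \<and> ((ltr r z G0 \<and> inX z) \<or>
       (z = G0 \<and> (\<forall>K\<in>UU. E K P \<and> ltr r K G0 \<and> inX K \<longrightarrow> sub K G0)))" by blast
  have aux1: "E K Y0 \<longleftrightarrow> inX K" if "K \<in> UU" "E K P" "ltr r K G0" for K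
    using Y0(3) that irr by blast
  have gY0: "goodY Y0 G0" unfolding goodY_def
  proof (intro conjI ballI impI)
    show "subset_of M Y0 P" using Y0 unfolding subset_of_def by blast
    fix H assume "H \<in> UU" "E H Y0" then show "seg H G0" using Y0 unfolding seg_def by blast
  next
    fix H assume H: "H \<in> UU" "E H P \<and> seg H G0"
    show "E H Y0 \<longleftrightarrow> (\<forall>K\<in>UU. E K Y0 \<and> ltr r K H \<longrightarrow> sub K H)"
    proof (cases "H = G0")
      case True
      have "E H Y0 \<longleftrightarrow> (\<forall>K\<in>UU. E K P \<and> ltr r K G0 \<and> inX K \<longrightarrow> sub K G0)"
        using Y0(3) H True irr by blast
      also have "\<dots> \<longleftrightarrow> (\<forall>K\<in>UU. E K Y0 \<and> ltr r K H \<longrightarrow> sub K H)"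
        using aux1 True Y0(3) by blast
      finally show ?thesis .
    next
      case False
      then have HG: "ltr r H G0" using H unfolding seg_def by blast
      obtain YH where YH: "YH \<in> UU" "goodY YH H" using below H HG by blast
      have "E H Y0 \<longleftrightarrow> inX H" using aux1 H HG by blast
      also have "\<dots> \<longleftrightarrow> E H YH" using inX_iff H YH by blast
      also have "\<dots> \<longleftrightarrow> (\<forall>K\<in>UU. E K YH \<and> ltr r K H \<longrightarrow> sub K H)"
        using YH(2) H unfolding goodY_def seg_def by blast
      also have "\<dots> \<longleftrightarrow> (\<forall>K\<in>UU. E K Y0 \<and> ltr r K H \<longrightarrow> sub K H)"
      proof -
        have "E K YH \<longleftrightarrow> E K Y0" if K: "K \<in> UU" "ltr r K H" "E K P" for K
        proof -
          have "ltr r K G0" using lt_seg[OF K(1) H(1) G0(1) K(3) _ G0P(1) K(2)] H HG unfolding seg_def by blast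
          then show ?thesis using aux2[OF H(1) _ HG YH(2,1) K(1,3)] aux1[OF K(1,3)] H K unfolding seg_def by blast
        qed
        then show ?thesis using goodP[OF YH(2)] Y0(3) by blast
      qed
      finally show ?thesis .
    qed
  qed
  have "E Y0 PP" using PPall Y0 gY0 unfolding goodY_def by blast
  then show False using G0P(2) gY0 Y0(1) by blast
qed

lemma inX_iff: "K \<in> UU \<Longrightarrow> E K P \<Longrightarrow> goodY Y K \<Longrightarrow> Y \<in> UU \<Longrightarrow> inX K \<longleftrightarrow> E K Y"
proof
  assume that: "K \<in> UU" "E K P" "goodY Y K" "Y \<in> UU"
  assume "inX K"
  then obtain Y' where "Y' \<in> UU" "goodY Y' K" "E K Y'" unfolding inX_def by blast
  then show "E K Y" using coherence[OF that(3,4) \<open>goodY Y' K\<close> \<open>Y' \<in> UU\<close> that(1,1,2,2)] that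
    unfolding seg_def by blast
next
  assume that: "K \<in> UU" "E K P" "goodY Y K" "Y \<in> UU"
  assume "E K Y" then show "inX K" unfolding inX_def using that PPall unfolding goodY_def by blast
qed

lemma recursion: "\<exists>X\<in>UU. is_set M X \<and> (\<forall>H\<in>UU. E H X \<longrightarrow> E H P) \<and>
   (\<forall>H\<in>UU. E H P \<longrightarrow> (E H X \<longleftrightarrow> (\<forall>K\<in>UU. E K X \<and> ltr r K H \<longrightarrow> sub K H)))"
proof -
  have "\<exists>X\<in>UU. is_set M X \<and> (\<forall>z\<in>UU. E z X \<longleftrightarrow> E z P \<and> inX z)"
    by (rule sep[where e="(\<lambda>_. P)(3:=P, 4:=r, 5:=PP)" and i=6 and \<phi>="inX_fm 6"])
       (use Pin rin PPin in \<open>auto\<close>)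
  then obtain X where X: "X \<in> UU" "is_set M X" "\<forall>z\<in>UU. E z X \<longleftrightarrow> E z P \<and> inX z" by blast
  have "E H X \<longleftrightarrow> (\<forall>K\<in>UU. E K X \<and> ltr r K H \<longrightarrow> sub K H)" if H: "H \<in> UU" "E H P" for H
  proof -
    obtain YH where YH: "YH \<in> UU" "goodY YH H" using good_ex H by blast
    have "E H X \<longleftrightarrow> E H YH" using X(3) inX_iff[OF H YH(2,1)] H by blast
    also have "\<dots> \<longleftrightarrow> (\<forall>K\<in>UU. E K YH \<and> ltr r K H \<longrightarrow> sub K H)"
      using YH(2) H unfolding goodY_def seg_def by blast
    also have "\<dots> \<longleftrightarrow> (\<forall>K\<in>UU. E K X \<and> ltr r K H \<longrightarrow> sub K H)"
    proof -
      have "E K YH \<longleftrightarrow> E K X" if K: "K \<in> UU" "ltr r K H" "E K P" for K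
      proof -
        obtain YK where YK: "YK \<in> UU" "goodY YK K" using good_ex K by blast
        have "E K YK \<longleftrightarrow> E K YH" using coherence[OF YK(2,1) YH(2,1) K(1) H(1) K(3) H(2)] K
          unfolding seg_def by blast
        then show ?thesis using inX_iff[OF K(1,3) YK(2,1)] X(3) K by blast
      qed
      then show ?thesis using goodP[OF YH(2)] X(3) by blast
    qed
    finally show ?thesis .
  qed
  then show ?thesis using X by blast
qed

end

fun bnd :: "fm \<Rightarrow> nat" where
  "bnd (Mem a b) = Suc (max a b)"
| "bnd (Eq a b) = Suc (max a b)"
| "bnd (Ur a) = Suc a"
| "bnd (Neg p) = bnd p"
| "bnd (Conj p q) = max (bnd p) (bnd q)"
| "bnd (Exi n p) = max (Suc n) (bnd p)"

lemma sat_agree: "(\<forall>k<bnd \<phi>. v k = v' k) \<Longrightarrow> sat M \<phi> v = sat M \<phi> v'"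
proof (induction \<phi> arbitrary: v v')
  case (Exi n p)
  have "sat M p (v(n:=a)) = sat M p (v'(n:=a))" for a
  proof (rule Exi.IH)
    show "\<forall>k<bnd p. (v(n:=a)) k = (v'(n:=a)) k" using Exi.prems by simp
  qed
  then show ?case by simp
next
  case (Conj p q)
  have "sat M p v = sat M p v'" by (rule Conj.IH(1)) (use Conj.prems in auto)
  moreover have "sat M q v = sat M q v'" by (rule Conj.IH(2)) (use Conj.prems in auto)
  ultimately show ?case by simp
qed auto

definition filt_fm where
  "filt_fm = Conj (Neg (Ur 6)) (Conj (All 7 (Imp (Mem 7 6) (subset_fm 7 3 10))) (Conj (Mem 3 6)
    (Conj (All 7 (All 8 (All 9 (Imp (Conj (Mem 7 6) (Conj (Mem 8 6) (Conj (Neg (Ur 9))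
         (All 10 (Iff (Mem 10 9) (Conj (Mem 10 7) (Mem 10 8))))))) (Mem 9 6)))))
     (Conj (All 7 (All 8 (Imp (Conj (Mem 7 6) (Conj (subset_fm 8 3 10) (All 10 (Imp (Mem 10 7) (Mem 10 8)))))
         (Mem 8 6))))
      (All 7 (Imp (Mem 7 6) (Neg (Mem 7 4))))))))"

locale cf = zfu +
  fixes \<phi> i j e w
  assumes ij: "i \<noteq> j" and eU: "\<forall>k. e k \<in> UU" and win: "w \<in> UU"
    and tot: "\<forall>a\<in>UU. E a w \<longrightarrow> (\<exists>b\<in>UU. sat M \<phi> (e(i:=a, j:=b)))"
    and NC: "\<not> (\<exists>v\<in>UU. \<forall>a\<in>UU. E a w \<longrightarrow> (\<exists>b\<in>UU. E b v \<and> sat M \<phi> (e(i:=a, j:=b))))"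
    and HL: "\<forall>F\<in>UU. \<forall>x\<in>UU. is_ultrafilter M F x \<longrightarrow> Los M F x"
begin

definition Cp where "Cp s \<longleftrightarrow> (\<exists>v\<in>UU. \<forall>a\<in>UU. E a s \<longrightarrow> (\<exists>b\<in>UU. E b v \<and> sat M \<phi> (e(i:=a, j:=b))))"

definition filt where "filt I G \<longleftrightarrow> is_set M G \<and> (\<forall>s\<in>UU. E s G \<longrightarrow> subset_of M s w) \<and> E w G \<and>
   (\<forall>s\<in>UU. \<forall>t\<in>UU. \<forall>u\<in>UU. E s G \<and> E t G \<and> is_set M u \<and> (\<forall>z\<in>UU. E z u \<longleftrightarrow> E z s \<and> E z t) \<longrightarrow> E u G) \<and>
   (\<forall>s\<in>UU. \<forall>t\<in>UU. E s G \<and> subset_of M t w \<and> (\<forall>z\<in>UU. E z s \<longrightarrow> E z t) \<longrightarrow> E t G) \<and>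
   (\<forall>s\<in>UU. E s G \<longrightarrow> \<not> E s I)"

lemma sat_filt_fm: "v 3 = w \<Longrightarrow> v 4 = I \<Longrightarrow> v 6 \<in> UU \<Longrightarrow> sat M filt_fm v = filt I (v 6)"
  unfolding filt_fm_def filt_def by (simp add: is_set_def)

lemma w_mem: "\<exists>a\<in>UU. E a w" using NC win by blast
lemma wset: "is_set M w" using w_mem mem_set win by blast

definition N where "N = max (bnd \<phi>) (Suc (max i j))"
lemma N_facts: "i < N" "j < N" "bnd \<phi> \<le> N" unfolding N_def by auto

definition Cfm where "Cfm = Exi (N+1) (All i (Imp (Mem i N) (Exi j (Conj (Mem j (N+1)) \<phi>))))"

lemma phi_agree: "sat M \<phi> (e(N:=z, N+1:=v, i:=a, j:=b)) = sat M \<phi> (e(i:=a, j:=b))"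
  by (rule sat_agree) (use N_facts in auto)

lemma sat_Cfm: "sat M Cfm (e(N:=z)) = Cp z"
proof -
  have d: "N \<noteq> i" "N \<noteq> j" "Suc N \<noteq> i" "Suc N \<noteq> j" "i \<noteq> N" "j \<noteq> N" "i \<noteq> Suc N" "j \<noteq> Suc N"
    using N_facts by auto
  show ?thesis unfolding Cfm_def Cp_def using d ij phi_agree by simp
qed

end

context zfu begin

lemma const_fun: assumes "x \<in> UU" "u \<in> UU"
  shows "\<exists>h\<in>UU. is_fun_on M h x \<and> (\<forall>a\<in>UU. E a x \<longrightarrow> app M h a = u)"
proof -
  obtain y where y: "y \<in> UU" "E u y" using pairing assms by blast
  obtain B where B: "B \<in> UU" "\<forall>a\<in>UU. \<forall>b\<in>UU. \<forall>p\<in>UU. E a x \<longrightarrow> E b y \<longrightarrow> is_opair M p a b \<longrightarrow> E p B"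
    using pairs_big[OF assms(1) y(1)] by blast
  have "\<exists>h\<in>UU. is_set M h \<and> (\<forall>p\<in>UU. E p h \<longleftrightarrow> E p B \<and> (\<exists>a\<in>UU. E a x \<and> (\<exists>b\<in>UU. is_opair M p a b \<and> b = u)))"
    by (rule sep[where e="(\<lambda>_. x)(3:=x, 9:=u)" and i=6
          and \<phi>="Exi 7 (Conj (Mem 7 3) (Exi 8 (Conj (opair_fm 6 7 8 1 2) (Eq 8 9))))"])
       (use assms B in auto)
  then obtain h where h: "h \<in> UU" "is_set M h" "\<forall>p\<in>UU. E p h \<longleftrightarrow> E p B \<and> (\<exists>a\<in>UU. E a x \<and> (\<exists>b\<in>UU. is_opair M p a b \<and> b = u))"
    by blast
  have hm: "\<forall>p\<in>UU. E p h \<longleftrightarrow> (\<exists>a\<in>UU. \<exists>b\<in>UU. E a x \<and> is_opair M p a b \<and> b = u)"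
    using h(3) B(2) y by blast
  have "is_fun_on M h x" "\<forall>a\<in>UU. E a x \<longrightarrow> app M h a = u"
    using mk_fun[OF assms(1) h(1,2) hm] assms(2) by auto
  then show ?thesis using h(1) by blast
qed

lemma id_fun: assumes "x \<in> UU"
  shows "\<exists>h\<in>UU. is_fun_on M h x \<and> (\<forall>a\<in>UU. E a x \<longrightarrow> app M h a = a)"
proof -
  obtain B where B: "B \<in> UU" "\<forall>a\<in>UU. \<forall>b\<in>UU. \<forall>p\<in>UU. E a x \<longrightarrow> E b x \<longrightarrow> is_opair M p a b \<longrightarrow> E p B"
    using pairs_big[OF assms(1) assms(1)] by blast
  have "\<exists>h\<in>UU. is_set M h \<and> (\<forall>p\<in>UU. E p h \<longleftrightarrow> E p B \<and> (\<exists>a\<in>UU. E a x \<and> (\<exists>b\<in>UU. is_opair M p a b \<and> b = a)))"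
    by (rule sep[where e="(\<lambda>_. x)(3:=x)" and i=6
          and \<phi>="Exi 7 (Conj (Mem 7 3) (Exi 8 (Conj (opair_fm 6 7 8 1 2) (Eq 8 7))))"])
       (use assms B in auto)
  then obtain h where h: "h \<in> UU" "is_set M h" "\<forall>p\<in>UU. E p h \<longleftrightarrow> E p B \<and> (\<exists>a\<in>UU. E a x \<and> (\<exists>b\<in>UU. is_opair M p a b \<and> b = a))"
    by blast
  have hm: "\<forall>p\<in>UU. E p h \<longleftrightarrow> (\<exists>a\<in>UU. \<exists>b\<in>UU. E a x \<and> is_opair M p a b \<and> b = a)"
    using h(3) B(2) by blast
  have "is_fun_on M h x" "\<forall>a\<in>UU. E a x \<longrightarrow> app M h a = a"
    using mk_fun[OF assms(1) h(1,2) hm] by auto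
  then show ?thesis using h(1) by blast
qed

lemma inter_ex: "s \<in> UU \<Longrightarrow> t \<in> UU \<Longrightarrow> \<exists>u\<in>UU. is_set M u \<and> (\<forall>z\<in>UU. E z u \<longleftrightarrow> E z s \<and> E z t)"
  by (rule sep[where e="(\<lambda>_. t)(3:=t)" and i=6 and \<phi>="Mem 6 3"]) auto

lemma union_ex: "a \<in> UU \<Longrightarrow> b \<in> UU \<Longrightarrow> \<exists>V\<in>UU. \<forall>z\<in>UU. (E z a \<or> E z b) \<longrightarrow> E z V"
proof -
  assume "a \<in> UU" "b \<in> UU"
  then obtain y where "y \<in> UU" "E a y" "E b y" using pairing by blast
  then obtain V where "V \<in> UU" "\<forall>z\<in>UU. E z y \<longrightarrow> (\<forall>t\<in>UU. E t z \<longrightarrow> E t V)" using union_ax by blast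
  then show ?thesis using \<open>a \<in> UU\<close> \<open>b \<in> UU\<close> \<open>E a y\<close> \<open>E b y\<close> by blast
qed

end

locale cf2 = cf +
  fixes Pw I PPw P r X Fu
  assumes Pw_in: "Pw \<in> UU" and Pw_iff: "\<forall>z\<in>UU. E z Pw \<longleftrightarrow> subset_of M z w"
    and I_in: "I \<in> UU" and I_iff: "\<forall>z\<in>UU. E z I \<longleftrightarrow> subset_of M z w \<and> Cp z"
    and PPw_in: "PPw \<in> UU" and PPw_all: "\<forall>z\<in>UU. subset_of M z Pw \<longrightarrow> E z PPw"
    and P_in: "P \<in> UU" and P_set: "is_set M P" and P_iff: "\<forall>G\<in>UU. E G P \<longleftrightarrow> E G PPw \<and> filt I G"
    and r_in: "r \<in> UU" and irr: "\<forall>a\<in>UU. E a P \<longrightarrow> \<not> ltr r a a"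
    and totr: "\<forall>a\<in>UU. \<forall>b\<in>UU. E a P \<and> E b P \<longrightarrow> ltr r a b \<or> a = b \<or> ltr r b a"
    and wfm: "\<forall>s\<in>UU. subset_of M s P \<and> (\<exists>t\<in>UU. E t s) \<longrightarrow> (\<exists>a\<in>UU. E a s \<and> (\<forall>b\<in>UU. E b s \<longrightarrow> \<not> ltr r b a))"
    and X_in: "X \<in> UU" and X_sub: "\<forall>H\<in>UU. E H X \<longrightarrow> E H P"
    and X_iff: "\<forall>H\<in>UU. E H P \<longrightarrow> (E H X \<longleftrightarrow> (\<forall>K\<in>UU. E K X \<and> ltr r K H \<longrightarrow> (\<forall>z\<in>UU. E z K \<longrightarrow> E z H)))"
    and Fu_in: "Fu \<in> UU" and Fu_set: "is_set M Fu"
    and Fu_iff: "\<forall>s\<in>UU. E s Fu \<longleftrightarrow> subset_of M s w \<and> (\<exists>G\<in>UU. E G X \<and> E s G)"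
begin

lemma chain: "G1 \<in> UU \<Longrightarrow> G2 \<in> UU \<Longrightarrow> E G1 X \<Longrightarrow> E G2 X \<Longrightarrow>
   (\<forall>z\<in>UU. E z G1 \<longrightarrow> E z G2) \<or> (\<forall>z\<in>UU. E z G2 \<longrightarrow> E z G1)"
proof -
  assume G: "G1 \<in> UU" "G2 \<in> UU" "E G1 X" "E G2 X"
  have P: "E G1 P" "E G2 P" using X_sub G by auto
  have "ltr r G1 G2 \<or> G1 = G2 \<or> ltr r G2 G1" using totr G(1,2) P by blast
  moreover have "ltr r G1 G2 \<Longrightarrow> (\<forall>z\<in>UU. E z G1 \<longrightarrow> E z G2)"
    using X_iff[rule_format, OF G(2) P(2)] G by blast
  moreover have "ltr r G2 G1 \<Longrightarrow> (\<forall>z\<in>UU. E z G2 \<longrightarrow> E z G1)"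
    using X_iff[rule_format, OF G(1) P(1)] G by blast
  ultimately show ?thesis by blast
qed

lemma Xfilt: "G \<in> UU \<Longrightarrow> E G X \<Longrightarrow> filt I G"
  using X_sub P_iff by blast

lemma filt_sub: "filt I G \<Longrightarrow> s \<in> UU \<Longrightarrow> E s G \<Longrightarrow> subset_of M s w"
  unfolding filt_def by (elim conjE) (rule mp, erule bspec, assumption+)

lemma Xne: "\<exists>G\<in>UU. E G X"
proof -
  obtain G1 where G1: "G1 \<in> UU" "is_upair M G1 w w" using upair_ex win by blast
  have G1m: "\<forall>z\<in>UU. E z G1 \<longleftrightarrow> z = w" using G1 unfolding is_upair_def by blast
  have sww: "subset_of M w w" using wset unfolding subset_of_def by blast
  have "filt I G1" unfolding filt_def
  proof (intro conjI ballI impI)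
    show "is_set M G1" using G1 unfolding is_upair_def by blast
    show "E w G1" using G1m win by blast
    fix s assume "s \<in> UU" "E s G1" then have "s = w" using G1m by blast
    then show "subset_of M s w" using sww by simp
  next
    fix s t u assume stu: "s \<in> UU" "t \<in> UU" "u \<in> UU"
      "E s G1 \<and> E t G1 \<and> is_set M u \<and> (\<forall>z\<in>UU. E z u \<longleftrightarrow> E z s \<and> E z t)"
    then have "s = w" "t = w" using G1m by auto
    then have "u = w" using stu wset by (intro extens) auto
    then show "E u G1" using G1m win by blast
  next
    fix s t assume st: "s \<in> UU" "t \<in> UU" "E s G1 \<and> subset_of M t w \<and> (\<forall>z\<in>UU. E z s \<longrightarrow> E z t)"
    then have "s = w" using G1m by auto
    then have "t = w" using st wset unfolding subset_of_def by (intro extens) auto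
    then show "E t G1" using G1m win by blast
  next
    fix s assume "s \<in> UU" "E s G1"
    then have "s = w" using G1m by auto
    then show "\<not> E s I" using I_iff[rule_format, OF win] NC unfolding Cp_def by simp
  qed
  moreover have "E G1 PPw"
  proof -
    have "E w Pw" using Pw_iff win sww by blast
    then have "subset_of M G1 Pw" using G1 G1m unfolding subset_of_def is_upair_def by auto
    then show ?thesis using PPw_all G1(1) by blast
  qed
  ultimately have "E G1 P" using P_iff G1 by blast
  moreover have "subset_of M P P" using P_set unfolding subset_of_def by blast
  ultimately obtain Gm where Gm: "Gm \<in> UU" "E Gm P" "\<forall>b\<in>UU. E b P \<longrightarrow> \<not> ltr r b Gm"
    using wfm P_in G1 by blast
  have "E Gm X" using X_iff[rule_format, OF Gm(1,2)] Gm(3) X_sub by blast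
  then show ?thesis using Gm by blast
qed

lemma wFu: "E w Fu"
proof -
  obtain G where "G \<in> UU" "E G X" using Xne by blast
  moreover have "subset_of M w w" using wset unfolding subset_of_def by blast
  ultimately show ?thesis using Fu_iff[rule_format, OF win] Xfilt[of G] unfolding filt_def by blast
qed

lemma Fu_notI: assumes "s \<in> UU" "E s Fu" shows "\<not> Cp s"
proof -
  obtain G where G: "G \<in> UU" "E G X" "E s G" "subset_of M s w" using Fu_iff assms by blast
  have "\<not> E s I" using Xfilt[OF G(1,2)] G(3) assms(1) unfolding filt_def by blast
  then show ?thesis using I_iff[rule_format, OF assms(1)] G(4) by blast
qed

lemma Fu_inter: assumes "s \<in> UU" "t \<in> UU" "u \<in> UU" "E s Fu" "E t Fu" "is_set M u"
  "\<forall>z\<in>UU. E z u \<longleftrightarrow> E z s \<and> E z t" shows "E u Fu"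
proof -
  obtain G1 where G1: "G1 \<in> UU" "E G1 X" "E s G1" "subset_of M s w" using Fu_iff assms(1,4) by blast
  obtain G2 where G2: "G2 \<in> UU" "E G2 X" "E t G2" using Fu_iff assms(2,5) by blast
  have uw: "subset_of M u w" using assms(6,7) G1(4) unfolding subset_of_def by blast
  from chain[OF G1(1) G2(1) G1(2) G2(2)] show ?thesis
  proof
    assume "\<forall>z\<in>UU. E z G1 \<longrightarrow> E z G2"
    then have "E s G2" using G1 assms(1) by blast
    then have "E u G2" using Xfilt[OF G2(1,2)] G2(3) assms(1,2,3,6,7) unfolding filt_def by blast
    then show ?thesis using Fu_iff[rule_format, OF assms(3)] uw G2(1,2) by blast
  next
    assume "\<forall>z\<in>UU. E z G2 \<longrightarrow> E z G1"
    then have "E t G1" using G2 assms(2) by blast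
    then have "E u G1" using Xfilt[OF G1(1,2)] G1(3) assms(1,2,3,6,7) unfolding filt_def by blast
    then show ?thesis using Fu_iff[rule_format, OF assms(3)] uw G1(1,2) by blast
  qed
qed

lemma Fu_up: assumes "s \<in> UU" "t \<in> UU" "E s Fu" "subset_of M t w" "\<forall>z\<in>UU. E z s \<longrightarrow> E z t"
  shows "E t Fu"
proof -
  obtain G where G: "G \<in> UU" "E G X" "E s G" using Fu_iff assms(1,3) by blast
  have "E t G" using Xfilt[OF G(1,2)] G(3) assms(1,2,4,5) unfolding filt_def by blast
  then show ?thesis using Fu_iff[rule_format, OF assms(2)] G(1,2) assms(4) by blast
qed

lemma gen_fail: assumes s': "s' \<in> UU" "subset_of M s' w" "\<not> E s' Fu"
  shows "\<exists>g\<in>UU. E g Fu \<and> (\<exists>v\<in>UU. \<forall>a\<in>UU. E a g \<and> E a s' \<longrightarrow> (\<exists>b\<in>UU. E b v \<and> sat M \<phi> (e(i:=a, j:=b))))"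
proof (rule ccontr)
  assume nc: "\<not> ?thesis"
  define Kp where "Kp t \<longleftrightarrow> (\<exists>g\<in>UU. E g Fu \<and> (\<forall>z\<in>UU. E z g \<and> E z s' \<longrightarrow> E z t))" for t
  have "\<exists>K\<in>UU. is_set M K \<and> (\<forall>t\<in>UU. E t K \<longleftrightarrow> E t Pw \<and> Kp t)"
    unfolding Kp_def
    by (rule sep[where e="(\<lambda>_. Fu)(4:=Fu, 5:=s')" and i=6
          and \<phi>="Exi 7 (Conj (Mem 7 4) (All 8 (Imp (Conj (Mem 8 7) (Mem 8 5)) (Mem 8 6))))"])
       (use Fu_in s' Pw_in in auto)
  then obtain K where K: "K \<in> UU" "is_set M K" "\<forall>t\<in>UU. E t K \<longleftrightarrow> E t Pw \<and> Kp t" by blast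
  have sww: "subset_of M w w" using wset unfolding subset_of_def by blast
  have Kiff: "E t K \<longleftrightarrow> E t Pw \<and> Kp t" if "t \<in> UU" for t using K(3) that by blast
  have KPw: "E t Pw" if "t \<in> UU" "E t K" for t using Kiff[OF that(1)] that(2) by blast
  have KKp: "Kp t" if "t \<in> UU" "E t K" for t using Kiff[OF that(1)] that(2) by blast
  have Kp_mem: "E t K" if "t \<in> UU" "subset_of M t w" "Kp t" for t
    using Kiff[OF that(1)] Pw_iff that by blast
  have Pwi: "E z Pw \<longleftrightarrow> subset_of M z w" if "z \<in> UU" for z using Pw_iff that by blast
  have c2: "\<forall>t\<in>UU. E t K \<longrightarrow> subset_of M t w"
  proof (intro ballI impI)
    fix t assume t: "t \<in> UU" "E t K"
    have "E t Pw" by (rule KPw[OF t])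
    then show "subset_of M t w" using Pwi[OF t(1)] by simp
  qed
  have c3: "E w K"
  proof -
    have "E w Fu \<and> (\<forall>y\<in>UU. E y w \<and> E y s' \<longrightarrow> E y w)" using wFu by blast
    then have "Kp w" unfolding Kp_def using win by blast
    then show "E w K" using Kp_mem[OF win sww] by blast
  qed
  have c4: "\<forall>t1\<in>UU. \<forall>t2\<in>UU. \<forall>u\<in>UU. E t1 K \<and> E t2 K \<and> is_set M u \<and> (\<forall>z\<in>UU. E z u \<longleftrightarrow> E z t1 \<and> E z t2) \<longrightarrow> E u K"
  proof (intro ballI impI)
    fix t1 t2 u assume tu: "t1 \<in> UU" "t2 \<in> UU" "u \<in> UU"
      "E t1 K \<and> E t2 K \<and> is_set M u \<and> (\<forall>z\<in>UU. E z u \<longleftrightarrow> E z t1 \<and> E z t2)"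
    have tK: "E t1 K" "E t2 K" and us: "is_set M u" and um: "\<forall>z\<in>UU. E z u \<longleftrightarrow> E z t1 \<and> E z t2"
      using tu(4) by auto
    have t1w: "subset_of M t1 w" using c2 tu(1) tK(1) by blast
    have uw: "subset_of M u w" unfolding subset_of_def
    proof (intro conjI ballI impI)
      show "is_set M u" by (rule us)
      fix z assume "z \<in> UU" "E z u"
      then have "E z t1" using um by simp
      then show "E z w" using t1w \<open>z \<in> UU\<close> unfolding subset_of_def by blast
    qed
    have "Kp t1" "Kp t2" using KKp tu(1,2) tK by blast+
    then obtain g1 g2 where g1: "g1 \<in> UU" "E g1 Fu" "\<forall>z\<in>UU. E z g1 \<and> E z s' \<longrightarrow> E z t1"
      and g2: "g2 \<in> UU" "E g2 Fu" "\<forall>z\<in>UU. E z g2 \<and> E z s' \<longrightarrow> E z t2" unfolding Kp_def by blast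
    obtain g where g: "g \<in> UU" "is_set M g" "\<forall>z\<in>UU. E z g \<longleftrightarrow> E z g1 \<and> E z g2" using inter_ex[OF g1(1) g2(1)] by blast
    have "E g Fu" using Fu_inter[OF g1(1) g2(1) g(1) g1(2) g2(2) g(2,3)] .
    moreover have "\<forall>z\<in>UU. E z g \<and> E z s' \<longrightarrow> E z u"
    proof (intro ballI impI)
      fix z assume z: "z \<in> UU" "E z g \<and> E z s'"
      then have "E z g1" "E z g2" using g(3) by auto
      then have "E z t1" "E z t2" using g1(3) g2(3) z by auto
      then show "E z u" using um z(1) by simp
    qed
    ultimately have "Kp u" unfolding Kp_def using g(1) by blast
    then show "E u K" using Kp_mem[OF tu(3) uw] by blast
  qed
  have c5: "\<forall>t\<in>UU. \<forall>t'\<in>UU. E t K \<and> subset_of M t' w \<and> (\<forall>z\<in>UU. E z t \<longrightarrow> E z t') \<longrightarrow> E t' K"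
  proof (intro ballI impI)
    fix t t' assume tt: "t \<in> UU" "t' \<in> UU" "E t K \<and> subset_of M t' w \<and> (\<forall>z\<in>UU. E z t \<longrightarrow> E z t')"
    then have "Kp t" using KKp by blast
    then obtain g where g: "g \<in> UU" "E g Fu" "\<forall>z\<in>UU. E z g \<and> E z s' \<longrightarrow> E z t" unfolding Kp_def by blast
    have "\<forall>z\<in>UU. E z g \<and> E z s' \<longrightarrow> E z t'" using g(3) tt(3) by blast
    then have "Kp t'" unfolding Kp_def using g(1,2) by blast
    then show "E t' K" using Kp_mem tt by blast
  qed
  have c6: "\<forall>t\<in>UU. E t K \<longrightarrow> \<not> E t I"
  proof (intro ballI impI)
    fix t assume t: "t \<in> UU" "E t K"
    show "\<not> E t I"
    proof
      assume "E t I"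
      then have "Cp t" using I_iff[rule_format, OF t(1)] by blast
      then obtain v where v: "v \<in> UU" "\<forall>a\<in>UU. E a t \<longrightarrow> (\<exists>b\<in>UU. E b v \<and> sat M \<phi> (e(i:=a, j:=b)))"
        unfolding Cp_def by blast
      obtain g where g: "g \<in> UU" "E g Fu" "\<forall>z\<in>UU. E z g \<and> E z s' \<longrightarrow> E z t" using KKp[OF t] unfolding Kp_def by blast
      have "\<forall>a\<in>UU. E a g \<and> E a s' \<longrightarrow> (\<exists>b\<in>UU. E b v \<and> sat M \<phi> (e(i:=a, j:=b)))" using v g by blast
      then show False using nc g(1,2) v(1) by blast
    qed
  qed
  have "filt I K" unfolding filt_def using K(2) c2 c3 c4 c5 c6 by (intro conjI)
  moreover have "E K PPw"
  proof -
    have "subset_of M K Pw" using K(2) KPw unfolding subset_of_def by blast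
    then show ?thesis using PPw_all K(1) by blast
  qed
  ultimately have KP: "E K P" using P_iff[rule_format, OF K(1)] by blast
  have "E K X"
  proof -
    have "\<forall>L\<in>UU. E L X \<and> ltr r L K \<longrightarrow> (\<forall>z\<in>UU. E z L \<longrightarrow> E z K)"
    proof (intro ballI impI)
      fix L z assume L: "L \<in> UU" "E L X \<and> ltr r L K" "z \<in> UU" "E z L"
      have "filt I L" using Xfilt[of L] L by blast
      then have zw: "subset_of M z w" using filt_sub L(3,4) by blast
      then have "E z Fu" using Fu_iff[rule_format, OF L(3)] L(1,2,4) by blast
      then have "E z Fu \<and> (\<forall>y\<in>UU. E y z \<and> E y s' \<longrightarrow> E y z)" by blast
      then have "Kp z" unfolding Kp_def using L(3) by blast
      then show "E z K" using Kp_mem L(3) zw by blast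
    qed
    then show ?thesis by (subst X_iff[rule_format, OF K(1) KP])
  qed
  moreover have "E s' K"
  proof -
    have "E w Fu \<and> (\<forall>y\<in>UU. E y w \<and> E y s' \<longrightarrow> E y s')" using wFu by blast
    then have "Kp s'" unfolding Kp_def using win by blast
    then show ?thesis using Kp_mem s' by blast
  qed
  ultimately have "E s' Fu" using Fu_iff[rule_format, OF s'(1)] s'(2) K(1) by blast
  then show False using s' by blast
qed

lemma Fu_ultra: assumes s: "s \<in> UU" "subset_of M s w"
  shows "E s Fu \<or> (\<forall>c\<in>UU. is_set M c \<and> (\<forall>z\<in>UU. E z c \<longleftrightarrow> E z w \<and> \<not> E z s) \<longrightarrow> E c Fu)"
proof (rule ccontr)
  assume "\<not> ?thesis"
  then obtain c where c: "\<not> E s Fu" "c \<in> UU" "is_set M c" "\<forall>z\<in>UU. E z c \<longleftrightarrow> E z w \<and> \<not> E z s" "\<not> E c Fu"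
    by blast
  have cw: "subset_of M c w" using c unfolding subset_of_def by blast
  obtain g1 v1 where g1: "g1 \<in> UU" "E g1 Fu" "v1 \<in> UU"
     "\<forall>a\<in>UU. E a g1 \<and> E a s \<longrightarrow> (\<exists>b\<in>UU. E b v1 \<and> sat M \<phi> (e(i:=a, j:=b)))"
    using gen_fail[OF s c(1)] by auto
  obtain g2 v2 where g2: "g2 \<in> UU" "E g2 Fu" "v2 \<in> UU"
     "\<forall>a\<in>UU. E a g2 \<and> E a c \<longrightarrow> (\<exists>b\<in>UU. E b v2 \<and> sat M \<phi> (e(i:=a, j:=b)))"
    using gen_fail[OF c(2) cw c(5)] by auto
  obtain u where u: "u \<in> UU" "is_set M u" "\<forall>z\<in>UU. E z u \<longleftrightarrow> E z g1 \<and> E z g2" using inter_ex[OF g1(1) g2(1)] by blast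
  have uF: "E u Fu" using Fu_inter[OF g1(1) g2(1) u(1) g1(2) g2(2) u(2,3)] .
  obtain V where V: "V \<in> UU" "\<forall>z\<in>UU. (E z v1 \<or> E z v2) \<longrightarrow> E z V" using union_ex[OF g1(3) g2(3)] by blast
  have g1w: "subset_of M g1 w" using Fu_iff g1 by blast
  have "Cp u" unfolding Cp_def
  proof (rule bexI[OF _ V(1)], intro ballI impI)
    fix a assume a: "a \<in> UU" "E a u"
    then have a12: "E a g1" "E a g2" using u by auto
    then have aw: "E a w" using g1w a unfolding subset_of_def by blast
    show "\<exists>b\<in>UU. E b V \<and> sat M \<phi> (e(i:=a, j:=b))"
    proof (cases "E a s")
      case True then show ?thesis using g1(4) a a12 V by blast
    next
      case False then have "E a c" using c(4) a aw by blast
      then show ?thesis using g2(4) a a12 V by blast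
    qed
  qed
  then show False using Fu_notI[OF u(1) uF] by blast
qed

lemma Fu_uf: "is_ultrafilter M Fu w"
  unfolding is_ultrafilter_def Let_def
proof (intro conjI ballI impI)
  show "is_set M Fu" by (rule Fu_set)
  show "E w Fu" by (rule wFu)
  fix s assume s: "s \<in> UU" "E s Fu"
  then show "subset_of M s w" using Fu_iff by blast
  show "\<exists>t\<in>UU. E t s"
  proof (rule ccontr)
    assume "\<not> (\<exists>t\<in>UU. E t s)"
    then have "Cp s" unfolding Cp_def using win by blast
    then show False using Fu_notI s by blast
  qed
next
  fix s t u assume "s \<in> UU" "t \<in> UU" "u \<in> UU"
    "E s Fu \<and> E t Fu \<and> is_set M u \<and> (\<forall>z\<in>UU. E z u \<longleftrightarrow> E z s \<and> E z t)"
  then show "E u Fu" using Fu_inter by blast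
next
  fix s t assume "s \<in> UU" "t \<in> UU" "E s Fu \<and> subset_of M t w \<and> (\<forall>z\<in>UU. E z s \<longrightarrow> E z t)"
  then show "E t Fu" using Fu_up by blast
next
  fix s assume "s \<in> UU" "subset_of M s w"
  then show "E s Fu \<or> (\<forall>c\<in>UU. is_set M c \<and> (\<forall>z\<in>UU. E z c \<longleftrightarrow> E z w \<and> \<not> E z s) \<longrightarrow> E c Fu)"
    by (rule Fu_ultra)
qed

lemma cf2_False: False
proof -
  have LosFu: "Los M Fu w" using HL Fu_in win Fu_uf by blast
  obtain hid where hid: "hid \<in> UU" "is_fun_on M hid w" "\<forall>a\<in>UU. E a w \<longrightarrow> app M hid a = a"
    using id_fun[OF win] by blast
  define cst where "cst u = (SOME h. h \<in> UU \<and> is_fun_on M h w \<and> (\<forall>a\<in>UU. E a w \<longrightarrow> app M h a = u))" for u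
  have cst: "cst u \<in> UU \<and> is_fun_on M (cst u) w \<and> (\<forall>a\<in>UU. E a w \<longrightarrow> app M (cst u) a = u)" if "u \<in> UU" for u
    unfolding cst_def by (rule someI_ex) (use const_fun[OF win that] in blast)
  define g where "g k = (if k = i then hid else cst (e k))" for k
  have gf: "\<forall>k. g k \<in> UU \<and> is_fun_on M (g k) w" using hid cst eU unfolding g_def by auto
  have gapp: "(\<lambda>k. app M (g k) y) = e(i:=y)" if y: "y \<in> UU" "E y w" for y
  proof (rule ext)
    fix k show "app M (g k) y = (e(i:=y)) k"
      using hid cst[of "e k"] eU y unfolding g_def by auto
  qed
  have L1: "sat (ultrapower M Fu w) (Exi j \<phi>) (\<lambda>k. cls M Fu w (g k)) \<longleftrightarrow>
      in_filter M Fu w (\<lambda>y. sat M (Exi j \<phi>) (\<lambda>k. app M (g k) y))"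
    using LosFu gf unfolding Los_def by blast
  have R1: "in_filter M Fu w (\<lambda>y. sat M (Exi j \<phi>) (\<lambda>k. app M (g k) y))"
    unfolding in_filter_def
  proof (rule bexI[OF _ win], intro conjI ballI)
    show "E w Fu" by (rule wFu)
    show "is_set M w" by (rule wset)
    fix y assume y: "y \<in> UU"
    show "E y w \<longleftrightarrow> E y w \<and> sat M (Exi j \<phi>) (\<lambda>k. app M (g k) y)"
    proof
      assume yw: "E y w"
      have "sat M (Exi j \<phi>) (e(i:=y))" using tot y yw by simp
      then show "E y w \<and> sat M (Exi j \<phi>) (\<lambda>k. app M (g k) y)" using gapp[OF y yw] yw by simp
    qed simp
  qed
  have "sat (ultrapower M Fu w) (Exi j \<phi>) (\<lambda>k. cls M Fu w (g k))" using L1 R1 by blast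
  then obtain C where C: "C \<in> univ (ultrapower M Fu w)" "sat (ultrapower M Fu w) \<phi> ((\<lambda>k. cls M Fu w (g k))(j:=C))"
    by auto
  then obtain h where h: "h \<in> UU" "is_fun_on M h w" "C = cls M Fu w h" unfolding ultrapower_def by auto
  define g' where "g' = g(j:=h)"
  have g'f: "\<forall>k. g' k \<in> UU \<and> is_fun_on M (g' k) w" using gf h unfolding g'_def by auto
  have "(\<lambda>k. cls M Fu w (g k))(j:=C) = (\<lambda>k. cls M Fu w (g' k))"
    by (rule ext) (simp add: g'_def h(3))
  then have "sat (ultrapower M Fu w) \<phi> (\<lambda>k. cls M Fu w (g' k))" using C(2) by simp
  then have "in_filter M Fu w (\<lambda>y. sat M \<phi> (\<lambda>k. app M (g' k) y))"
    using LosFu g'f unfolding Los_def by blast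
  then obtain s where s: "s \<in> UU" "E s Fu" "is_set M s"
      "\<forall>y\<in>UU. E y s \<longleftrightarrow> E y w \<and> sat M \<phi> (\<lambda>k. app M (g' k) y)"
    unfolding in_filter_def by blast
  have g'app: "(\<lambda>k. app M (g' k) y) = e(i:=y, j := app M h y)" if y: "y \<in> UU" "E y w" for y
  proof (rule ext)
    fix k show "app M (g' k) y = (e(i:=y, j := app M h y)) k"
    proof (cases "k = j")
      case True then show ?thesis unfolding g'_def by simp
    next
      case False
      then have "app M (g' k) y = app M (g k) y" unfolding g'_def by simp
      also have "\<dots> = (e(i:=y)) k" using gapp[OF y] by metis
      finally show ?thesis using False by simp
    qed
  qed
  obtain V where V: "V \<in> UU" "\<forall>p\<in>UU. E p h \<longrightarrow> (\<forall>z\<in>UU. E z p \<longrightarrow> (\<forall>b\<in>UU. E b z \<longrightarrow> E b V))"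
    using union2[OF h(1)] by blast
  have "Cp s" unfolding Cp_def
  proof (rule bexI[OF _ V(1)], intro ballI impI)
    fix a assume a: "a \<in> UU" "E a s"
    then have aw: "E a w" and sa: "sat M \<phi> (\<lambda>k. app M (g' k) a)" using s(4) by auto
    have sa': "sat M \<phi> (e(i:=a, j := app M h a))" using sa g'app[OF a(1) aw] by simp
    have bU: "app M h a \<in> UU" using fun_app(1)[OF h(2) a(1) aw] .
    obtain p where p: "p \<in> UU" "E p h" "is_opair M p a (app M h a)" using fun_app(2)[OF h(2) a(1) aw] by blast
    obtain z where z: "z \<in> UU" "E z p" "E (app M h a) z" using opair_snd_in[OF p(3) a(1) bU] by blast
    have "E (app M h a) V" using V(2) p z bU by blast
    then show "\<exists>b\<in>UU. E b V \<and> sat M \<phi> (e(i:=a, j:=b))" using sa' bU by blast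
  qed
  then show False using Fu_notI[OF s(1,2)] by blast
qed

end

context cf begin

lemma cf_False: False
proof -
  obtain PB where PB: "PB \<in> UU" "\<forall>z\<in>UU. subset_of M z w \<longrightarrow> E z PB" using power_ax win by blast
  have "\<exists>Pw\<in>UU. is_set M Pw \<and> (\<forall>z\<in>UU. E z Pw \<longleftrightarrow> E z PB \<and> subset_of M z w)"
    by (rule sep[where e="(\<lambda>_. w)(3:=w)" and i=6 and \<phi>="subset_fm 6 3 7"]) (use win PB in auto)
  then obtain Pw where Pw: "Pw \<in> UU" "\<forall>z\<in>UU. E z Pw \<longleftrightarrow> subset_of M z w" using PB by blast
  have "\<exists>I\<in>UU. is_set M I \<and> (\<forall>z\<in>UU. E z I \<longleftrightarrow> E z Pw \<and> Cp z)"
    by (rule sep[where e="e" and i=N and \<phi>="Cfm"]) (use eU Pw sat_Cfm in auto)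
  then obtain I where I: "I \<in> UU" "\<forall>z\<in>UU. E z I \<longleftrightarrow> subset_of M z w \<and> Cp z" using Pw by blast
  obtain PPw where PPw: "PPw \<in> UU" "\<forall>z\<in>UU. subset_of M z Pw \<longrightarrow> E z PPw" using power_ax Pw by blast
  have "\<exists>P\<in>UU. is_set M P \<and> (\<forall>z\<in>UU. E z P \<longleftrightarrow> E z PPw \<and> filt I z)"
    by (rule sep[where e="(\<lambda>_. w)(3:=w, 4:=I)" and i=6 and \<phi>="filt_fm"]) (use win I PPw sat_filt_fm in auto)
  then obtain P where P: "P \<in> UU" "is_set M P" "\<forall>z\<in>UU. E z P \<longleftrightarrow> E z PPw \<and> filt I z" by blast
  obtain r where r: "r \<in> UU"
     "\<forall>a\<in>UU. E a P \<longrightarrow> \<not> ltr r a a"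
     "\<forall>a\<in>UU. \<forall>b\<in>UU. \<forall>c\<in>UU. E a P \<and> E b P \<and> E c P \<and> ltr r a b \<and> ltr r b c \<longrightarrow> ltr r a c"
     "\<forall>a\<in>UU. \<forall>b\<in>UU. E a P \<and> E b P \<longrightarrow> ltr r a b \<or> a = b \<or> ltr r b a"
     "\<forall>s\<in>UU. subset_of M s P \<and> (\<exists>t\<in>UU. E t s) \<longrightarrow> (\<exists>a\<in>UU. E a s \<and> (\<forall>b\<in>UU. E b s \<longrightarrow> \<not> ltr r b a))"
    using choice_ax[OF P(1,2)] by blast
  obtain PP where PP: "PP \<in> UU" "\<forall>z\<in>UU. subset_of M z P \<longrightarrow> E z PP" using power_ax P by blast
  have T: "trf M P r PP" unfolding trf_def trf_axioms_def using zfu_axioms P(1,2) r PP by blast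
  obtain X where X: "X \<in> UU" "is_set M X" "\<forall>H\<in>UU. E H X \<longrightarrow> E H P"
     "\<forall>H\<in>UU. E H P \<longrightarrow> (E H X \<longleftrightarrow> (\<forall>K\<in>UU. E K X \<and> ltr r K H \<longrightarrow> (\<forall>z\<in>UU. E z K \<longrightarrow> E z H)))"
    using trf.recursion[OF T] unfolding trf.sub_def[OF T] by blast
  have "\<exists>Fu\<in>UU. is_set M Fu \<and> (\<forall>z\<in>UU. E z Fu \<longleftrightarrow> E z Pw \<and> (\<exists>G\<in>UU. E G X \<and> E z G))"
    by (rule sep[where e="(\<lambda>_. w)(4:=X)" and i=6 and \<phi>="Exi 7 (Conj (Mem 7 4) (Mem 6 7))"]) (use win X Pw in auto)
  then obtain Fu where Fu: "Fu \<in> UU" "is_set M Fu" "\<forall>z\<in>UU. E z Fu \<longleftrightarrow> subset_of M z w \<and> (\<exists>G\<in>UU. E G X \<and> E z G)"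
    using Pw by blast
  have C2: "cf2 M \<phi> i j e w Pw I PPw P r X Fu"
    unfolding cf2_def cf2_axioms_def using cf_axioms Pw I PPw P r X Fu by blast
  show False using cf2.cf2_False[OF C2] .
qed

end

theorem mainTheorem12:
  fixes U :: "'a struc"
  assumes "ZFCU_R U"
  shows "Collection U \<longleftrightarrow>
         (\<forall>F\<in>univ U. \<forall>x\<in>univ U. is_ultrafilter U F x \<longrightarrow> Los U F x)"
proof
  assume C: "Collection U"
  show "\<forall>F\<in>univ U. \<forall>x\<in>univ U. is_ultrafilter U F x \<longrightarrow> Los U F x"
  proof (intro ballI impI)
    fix F x assume "F \<in> univ U" "x \<in> univ U" "is_ultrafilter U F x"
    then have "zfuf U F x" unfolding zfuf_def zfuf_axioms_def zfu_def using assms by blast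
    then show "Los U F x" by (rule zfuf.Los_holds) (rule C)
  qed
next
  assume HL: "\<forall>F\<in>univ U. \<forall>x\<in>univ U. is_ultrafilter U F x \<longrightarrow> Los U F x"
  show "Collection U" unfolding Collection_def
  proof (intro allI impI ballI)
    fix \<phi> i j e w
    assume ij: "i \<noteq> j" and eU: "\<forall>k. e k \<in> univ U" and w: "w \<in> univ U"
      and tot: "\<forall>x\<in>univ U. memb U x w \<longrightarrow> (\<exists>y\<in>univ U. sat U \<phi> (e(i := x, j := y)))"
    show "\<exists>v\<in>univ U. \<forall>x\<in>univ U. memb U x w \<longrightarrow> (\<exists>y\<in>univ U. memb U y v \<and> sat U \<phi> (e(i := x, j := y)))"
    proof (rule ccontr)
      assume NC: "\<not> ?thesis"
      have "cf U \<phi> i j e w" unfolding cf_def cf_axioms_def zfu_def using assms ij eU w tot NC HL by blast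
      then show False by (rule cf.cf_False)
    qed
  qed
qed


end
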